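(* Let $\Gamma=(\mathcal{A},\Theta,p,c)$ be a basic game that is a potential game whose potential $\Phi_\theta$ is strictly convex for every $\theta\in\Theta$. Let $\mu$ be a BCWE of $\Gamma$ and $\psi:\mathcal{Y}\times\Theta\to\mathbb{R}$ continuous. Then for every $\varepsilon>0$ there exist $\alpha>0$ and a direct information structure $\mathcal{I}$ such that $(\Gamma,\mathcal{I})$ has a unique Bayesian Wardrop equilibrium outcome, and for every outcome $\tilde\mu$ of a Bayesian Wardrop $\alpha$-equilibrium of $(\Gamma,\mathcal{I})$, $$\Big|\int\psi(y,\theta)\,d\mu(y\mid\theta)-\int\psi(y,\theta)\,d\tilde\mu(y\mid\theta)\Big|\le\varepsilon\quad\text{for all }\theta\in\Theta.$$
   Context: Basic game: $\Gamma=(\mathcal{A},\Theta,p,c)$ with $\mathcal{A}$ a finite set of actions, $\Theta$ a finite set of states, $p\in\Delta(\Theta)$ a full-support prior, and $c=(c_a)_{a\in\mathcal{A}}$ with each $c_a:\mathcal{Y}\times\Theta\to\mathbb{R}$ continuous, where $\mathcal{Y}=\Delta(\mathcal{A})=\{y\in\mathbb{R}^{\mathcal{A}}_{\ge0}:\sum_a y_a=1\}$. For $\gamma>0$, $\Delta_\gamma(\mathcal{A})=\{y\in\mathbb{R}^{\mathcal{A}}_{\ge0}:\sum_a y_a=\gamma\}$. $\Gamma$ is a potential game if for each $\theta$ there is an open set $\widetilde{\mathcal{Y}}\supseteq\mathcal{Y}$ in $\mathbb{R}^{\mathcal{A}}$ and a continuously differentiable $\Phi_\theta:\widetilde{\mathcal{Y}}\to\mathbb{R}$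 with $\partial\Phi_\theta(y)/\partial y_a=c_a(y,\theta)$ for all $a$ and $y\in\mathcal{Y}$. An outcome is a map $\mu:\Theta\to\Delta(\mathcal{Y})$ (Borel probability measures). A BCWE is an outcome $\mu$ such that for all $a,b\in\mathcal{A}$: $\sum_\theta p(\theta)\int y_a c_a(y,\theta)\,d\mu(y\mid\theta)\le\sum_\theta p(\theta)\int y_a c_b(y,\theta)\,d\mu(y\mid\theta)$. Information structure: $\mathcal{I}=(\gamma,\mathcal{T},\pi)$ consisting of a finite set $\mathcal{K}$ of populations with sizes $\gamma^k>0$, $\sum_k\gamma^k=1$; finite type sets $\mathcal{T}^k$, $\mathcal{T}=\prod_k\mathcal{T}^k$; and $\pi:\Theta\to\Delta(\mathcal{T})$. An interim flow profile is $\hat y=(y^k(\tau^k))_{k,\tau^k}$ with $y^k(\tau^k)\in\Delta_{\gamma^k}(\mathcal{A})$; total flow $y(\tau)=\sum_k y^k(\tau^k)$. Let $P(\tau^k)=\sum_\theta\sum_{\tau^{-k}}p(\theta)\pi(\tau^k,\tau^{-k}\mid\theta)$. For $\varepsilon\ge0$, $\hat y$ is a Bayesian Wardrop $\varepsilon$-equilibrium of $(\Gamma,\mathcal{I})$ if for all $k$, all $\tau^k$ with $P(\tau^k)>0$ and all $a,b$ with $y^k_a(\tau^k)>0$: $\sum_\theta\sum_{\tau^{-k}}p(\theta)\pi(\tau^k,\tau^{-k}\mid\theta)c_a(y(\tau),\theta)\le\sum_\theta\sum_{\tau^{-k}}p(\theta)\pi(\tau^k,\tau^{-k}\mid\theta)c_b(y(\tau),\theta)+\varepsilon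 P(\tau^k)$; a Bayesian Wardrop equilibrium is the case $\varepsilon=0$. The outcome of $\hat y$ is $\mu(z\mid\theta)=\sum_{\tau:\,y(\tau)=z}\pi(\tau\mid\theta)$. $\mathcal{I}$ is direct if $\mathcal{T}^k=\mathcal{A}$ for all $k$. *)

theory Defs
  imports "HOL-Analysis.Analysis" "HOL-Probability.Probability"
begin

definition simplex_gamma :: "real \<Rightarrow> (real ^ 'a::finite) set" where
  "simplex_gamma g = {y. (\<forall>a. 0 \<le> y $ a) \<and> (\<Sum>a\<in>UNIV. y $ a) = g}"

abbreviation simplexY :: "(real ^ 'a::finite) set" where
  "simplexY \<equiv> simplex_gamma 1"

definition strictly_convex_on :: "'v::real_vector set \<Rightarrow> ('v \<Rightarrow> real) \<Rightarrow> bool" where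
  "strictly_convex_on S f \<longleftrightarrow>
     (\<forall>x\<in>S. \<forall>y\<in>S. \<forall>u::real. x \<noteq> y \<and> 0 < u \<and> u < 1 \<longrightarrow>
        f (u *\<^sub>R x + (1 - u) *\<^sub>R y) < u * f x + (1 - u) * f y)"

definition basic_game :: "('t::finite \<Rightarrow> real) \<Rightarrow> ('a::finite \<Rightarrow> real ^ 'a \<Rightarrow> 't \<Rightarrow> real) \<Rightarrow> bool" where
  "basic_game p c \<longleftrightarrow> (\<forall>\<theta>. 0 < p \<theta>) \<and> (\<Sum>\<theta>\<in>UNIV. p \<theta>) = 1 \<and>
     (\<forall>a \<theta>. continuous_on simplexY (\<lambda>y. c a y \<theta>))"

definition is_potential :: "('a::finite \<Rightarrow> real ^ 'a \<Rightarrow> 't \<Rightarrow> real) \<Rightarrow> ('t \<Rightarrow> real ^ 'a \<Rightarrow> real) \<Rightarrow> bool" where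
  "is_potential c \<Phi> \<longleftrightarrow> (\<forall>\<theta>. \<exists>U grad. open U \<and> simplexY \<subseteq> U \<and>
      continuous_on U grad \<and>
      (\<forall>y\<in>U. (\<Phi> \<theta> has_derivative (\<lambda>h. grad y \<bullet> h)) (at y)) \<and>
      (\<forall>y\<in>simplexY. \<forall>a. grad y $ a = c a y \<theta>))"

definition is_outcome :: "('t \<Rightarrow> (real ^ 'a::finite) measure) \<Rightarrow> bool" where
  "is_outcome \<mu> \<longleftrightarrow> (\<forall>\<theta>. prob_space (\<mu> \<theta>) \<and> sets (\<mu> \<theta>) = sets (restrict_space borel simplexY))"

definition BCWE :: "('t::finite \<Rightarrow> real) \<Rightarrow> ('a::finite \<Rightarrow> real ^ 'a \<Rightarrow> 't \<Rightarrow> real)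
    \<Rightarrow> ('t \<Rightarrow> (real ^ 'a) measure) \<Rightarrow> bool" where
  "BCWE p c \<mu> \<longleftrightarrow> is_outcome \<mu> \<and>
     (\<forall>a b. (\<Sum>\<theta>\<in>UNIV. p \<theta> * (\<integral>y. y $ a * c a y \<theta> \<partial>\<mu> \<theta>))
          \<le> (\<Sum>\<theta>\<in>UNIV. p \<theta> * (\<integral>y. y $ a * c b y \<theta> \<partial>\<mu> \<theta>)))"

text \<open>Direct information structure: a finite set K of populations (labelled by naturals) with
  sizes gam k > 0 summing to 1; each population's type set is the action set; type profiles are
  the functions in PiE K (\<lambda>_. UNIV); tp \<theta> is a distribution on type profiles.\<close>
definition type_profiles :: "nat set \<Rightarrow> (nat \<Rightarrow> 'a) set" where
  "type_profiles K = PiE K (\<lambda>_. UNIV)"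

definition direct_info :: "nat set \<Rightarrow> (nat \<Rightarrow> real) \<Rightarrow> ('t \<Rightarrow> (nat \<Rightarrow> 'a::finite) pmf) \<Rightarrow> bool" where
  "direct_info K gam tp \<longleftrightarrow> finite K \<and> (\<forall>k\<in>K. 0 < gam k) \<and> (\<Sum>k\<in>K. gam k) = 1 \<and>
     (\<forall>\<theta>. set_pmf (tp \<theta>) \<subseteq> type_profiles K)"

definition interim_profile :: "nat set \<Rightarrow> (nat \<Rightarrow> real) \<Rightarrow> (nat \<Rightarrow> 'a \<Rightarrow> real ^ 'a::finite) \<Rightarrow> bool" where
  "interim_profile K gam yh \<longleftrightarrow> (\<forall>k\<in>K. \<forall>t. yh k t \<in> simplex_gamma (gam k))"

definition total_flow :: "nat set \<Rightarrow> (nat \<Rightarrow> 'a \<Rightarrow> real ^ 'a::finite) \<Rightarrow> (nat \<Rightarrow> 'a) \<Rightarrow> real ^ 'a" where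
  "total_flow K yh \<tau> = (\<Sum>k\<in>K. yh k (\<tau> k))"

definition interim_prob :: "('t::finite \<Rightarrow> real) \<Rightarrow> nat set \<Rightarrow> ('t \<Rightarrow> (nat \<Rightarrow> 'a) pmf) \<Rightarrow> nat \<Rightarrow> 'a \<Rightarrow> real" where
  "interim_prob p K tp k t = (\<Sum>\<theta>\<in>UNIV. \<Sum>\<tau>\<in>{\<tau>\<in>type_profiles K. \<tau> k = t}. p \<theta> * pmf (tp \<theta>) \<tau>)"

definition interim_cost :: "('t::finite \<Rightarrow> real) \<Rightarrow> ('a::finite \<Rightarrow> real ^ 'a \<Rightarrow> 't \<Rightarrow> real) \<Rightarrow> nat set
    \<Rightarrow> ('t \<Rightarrow> (nat \<Rightarrow> 'a) pmf) \<Rightarrow> (nat \<Rightarrow> 'a \<Rightarrow> real ^ 'a) \<Rightarrow> nat \<Rightarrow> 'a \<Rightarrow> 'a \<Rightarrow> real" where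
  "interim_cost p c K tp yh k t a =
     (\<Sum>\<theta>\<in>UNIV. \<Sum>\<tau>\<in>{\<tau>\<in>type_profiles K. \<tau> k = t}. p \<theta> * pmf (tp \<theta>) \<tau> * c a (total_flow K yh \<tau>) \<theta>)"

definition BW_eps_eq :: "('t::finite \<Rightarrow> real) \<Rightarrow> ('a::finite \<Rightarrow> real ^ 'a \<Rightarrow> 't \<Rightarrow> real) \<Rightarrow> nat set
    \<Rightarrow> (nat \<Rightarrow> real) \<Rightarrow> ('t \<Rightarrow> (nat \<Rightarrow> 'a) pmf) \<Rightarrow> real \<Rightarrow> (nat \<Rightarrow> 'a \<Rightarrow> real ^ 'a) \<Rightarrow> bool" where
  "BW_eps_eq p c K gam tp eps yh \<longleftrightarrow> interim_profile K gam yh \<and>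
     (\<forall>k\<in>K. \<forall>t. interim_prob p K tp k t > 0 \<longrightarrow>
        (\<forall>a b. yh k t $ a > 0 \<longrightarrow>
           interim_cost p c K tp yh k t a \<le> interim_cost p c K tp yh k t b + eps * interim_prob p K tp k t))"

definition BW_outcome :: "nat set \<Rightarrow> ('t \<Rightarrow> (nat \<Rightarrow> 'a) pmf) \<Rightarrow> (nat \<Rightarrow> 'a \<Rightarrow> real ^ 'a::finite)
    \<Rightarrow> 't \<Rightarrow> (real ^ 'a) pmf" where
  "BW_outcome K tp yh \<theta> = map_pmf (total_flow K yh) (tp \<theta>)"

end

theory Submission
  imports Defs
begin



lemma tangent_strict:
  fixes f :: "'v::real_inner \<Rightarrow> real"
  assumes S: "convex S" and sc: "strictly_convex_on S f" and x: "x \<in> S" and y: "y \<in> S"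
    and xy: "x \<noteq> y" and der: "(f has_derivative (\<lambda>h. g \<bullet> h)) (at x)"
  shows "g \<bullet> (y - x) < f y - f x"
proof -
  define d where "d = y - x"
  define m where "m = (1/2::real) *\<^sub>R y + (1 - 1/2) *\<^sub>R x"
  have mS: "m \<in> S" using S x y unfolding m_def by (simp add: convex_def)
  have "y = 2 *\<^sub>R m - x" unfolding m_def by (simp add: algebra_simps)
  then have mx: "m \<noteq> x" using xy by (auto simp: scaleR_2)
  have fm: "f m < 1/2 * f y + (1 - 1/2) * f x"
    unfolding m_def by (rule sc[unfolded strictly_convex_on_def, rule_format]) (use y x xy in auto)
  have quot: "(f (x + u *\<^sub>R d) - f x) / u \<le> 2 * (f m - f x)" if u: "0 < u" "u \<le> 1/2" for u
  proof -
    have eqp: "x + u *\<^sub>R d = (2*u) *\<^sub>R m + (1 - 2*u) *\<^sub>R x"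
      unfolding d_def m_def by (simp add: algebra_simps flip: scaleR_2)
    have "f (x + u *\<^sub>R d) \<le> (2*u) * f m + (1 - 2*u) * f x"
    proof (cases "u = 1/2")
      case True then have "2*u = 1" by simp
      then show ?thesis using eqp by simp
    next
      case False
      then have "2*u < 1" using u by simp
      then show ?thesis using sc mS x mx u unfolding eqp strictly_convex_on_def
        by (metis less_eq_real_def mult_pos_pos zero_less_numeral)
    qed
    then have "f (x + u *\<^sub>R d) - f x \<le> u * (2 * (f m - f x))" by (simp add: algebra_simps)
    then show ?thesis using u by (simp add: divide_le_eq mult.commute)
  qed
  have hd: "((\<lambda>u. f (x + u *\<^sub>R d)) has_derivative (\<lambda>u. g \<bullet> (u *\<^sub>R d))) (at 0)"
  proof -
    have lin: "((\<lambda>u::real. x + u *\<^sub>R d) has_derivative (\<lambda>u. u *\<^sub>R d)) (at 0)"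
      by (auto intro!: derivative_eq_intros)
    have der0: "(f has_derivative (\<lambda>h. g \<bullet> h)) (at (x + (0::real) *\<^sub>R d))" using der by simp
    show ?thesis by (rule has_derivative_compose[OF lin der0])
  qed
  then have "((\<lambda>u. f (x + u *\<^sub>R d)) has_field_derivative (g \<bullet> d)) (at 0)"
  proof -
    have e: "(\<lambda>u. g \<bullet> (u *\<^sub>R d)) = (*) (g \<bullet> d)" by (auto simp: fun_eq_iff)
    show ?thesis using hd unfolding has_field_derivative_def e .
  qed
  then have "((\<lambda>u. f (x + u *\<^sub>R d)) has_field_derivative (g \<bullet> d)) (at 0 within {0<..})"
    by (rule has_field_derivative_at_within)
  then have lim: "((\<lambda>u. (f (x + u *\<^sub>R d) - f x) / u) \<longlongrightarrow> g \<bullet> d) (at_right 0)"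
    by (simp add: has_field_derivative_iff)
  have ev: "eventually (\<lambda>u. (f (x + u *\<^sub>R d) - f x) / u \<le> 2 * (f m - f x)) (at_right 0)"
    unfolding eventually_at_right_field
    by (rule exI[of _ "1/2"]) (use quot in force)
  have "g \<bullet> d \<le> 2 * (f m - f x)"
    by (rule tendsto_upperbound[OF lim ev]) simp
  also have "\<dots> < f y - f x" using fm by simp
  finally show ?thesis unfolding d_def .
qed

lemma convex_simplex: "convex (simplex_gamma g :: (real^'a::finite) set)"
  unfolding convex_def simplex_gamma_def
  by (auto simp: sum.distrib sum_distrib_left[symmetric]) (metis distrib_right mult_1)


lemma compact_simplex: "compact (simplex_gamma g :: (real^'a::finite) set)"
proof -
  have e: "simplex_gamma g = {y::real^'a. \<forall>a. 0 \<le> y $ a} \<inter> {y. (\<Sum>a\<in>UNIV. y $ a) = g}"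
    unfolding simplex_gamma_def by auto
  have c1: "closed {y::real^'a. \<forall>a. 0 \<le> y $ a}"
    by (intro closed_Collect_all closed_Collect_le continuous_intros)
  have c2: "closed {y::real^'a. (\<Sum>a\<in>UNIV. y $ a) = g}"
    by (intro closed_Collect_eq continuous_intros)
  have b: "bounded (simplex_gamma g :: (real^'a) set)"
  proof -
    have "norm y \<le> \<bar>g\<bar>" if "y \<in> simplex_gamma g" for y :: "real^'a"
    proof -
      have "norm y \<le> (\<Sum>a\<in>UNIV. \<bar>y$a\<bar>)" by (rule norm_le_l1_cart)
      also have "\<dots> = (\<Sum>a\<in>UNIV. y$a)" using that unfolding simplex_gamma_def by auto
      also have "\<dots> = g" using that unfolding simplex_gamma_def by auto
      finally show ?thesis by simp
    qed
    then show ?thesis unfolding bounded_iff by blast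
  qed
  show ?thesis unfolding compact_eq_bounded_closed using b c1 c2 e by auto
qed

definition Gm :: "('a::finite \<Rightarrow> real^'a \<Rightarrow> 't \<Rightarrow> real) \<Rightarrow> 't \<Rightarrow> real^'a \<Rightarrow> real^'a \<Rightarrow> real" where
  "Gm c \<theta> y y' = (\<Sum>a\<in>UNIV. (y$a - y'$a) * (c a y \<theta> - c a y' \<theta>))"

lemma Gm_pos:
  assumes pot: "is_potential c \<Phi>" and sc: "strictly_convex_on simplexY (\<Phi> \<theta>)"
    and y: "y \<in> simplexY" and y': "y' \<in> simplexY" and ne: "y \<noteq> y'"
  shows "Gm c \<theta> y y' > 0"
proof -
  obtain U grad where U: "open U" "simplexY \<subseteq> U"
    and d: "\<forall>y\<in>U. (\<Phi> \<theta> has_derivative (\<lambda>h. grad y \<bullet> h)) (at y)"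
    and g: "\<forall>y\<in>simplexY. \<forall>a. grad y $ a = c a y \<theta>"
    using pot unfolding is_potential_def by metis
  have t1: "grad y' \<bullet> (y - y') < \<Phi> \<theta> y - \<Phi> \<theta> y'"
    by (rule tangent_strict[OF convex_simplex sc y' y]) (use ne d U y' in auto)
  have t2: "grad y \<bullet> (y' - y) < \<Phi> \<theta> y' - \<Phi> \<theta> y"
    by (rule tangent_strict[OF convex_simplex sc y y']) (use ne d U y in auto)
  have "Gm c \<theta> y y' = (grad y - grad y') \<bullet> (y - y')"
    unfolding Gm_def inner_vec_def using g y y' by (auto simp: algebra_simps intro!: sum.cong)
  also have "\<dots> = grad y \<bullet> (y - y') - grad y' \<bullet> (y - y')" by (simp add: inner_diff_left)
  also have "grad y \<bullet> (y - y') = - (grad y \<bullet> (y' - y))" by (simp add: inner_diff_right)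
  finally show ?thesis using t1 t2 by linarith
qed

lemma Gm_nonneg:
  assumes pot: "is_potential c \<Phi>" and sc: "strictly_convex_on simplexY (\<Phi> \<theta>)"
    and y: "y \<in> simplexY" and y': "y' \<in> simplexY"
  shows "Gm c \<theta> y y' \<ge> 0"
  using Gm_pos[OF pot sc y y'] by (cases "y = y'") (auto simp: Gm_def)

lemma Gm_margin:
  fixes c :: "'a::finite \<Rightarrow> real^'a \<Rightarrow> 't::finite \<Rightarrow> real" and p :: "'t \<Rightarrow> real"
  assumes game: "basic_game p c" and pot: "is_potential c \<Phi>"
    and sc: "\<forall>\<theta>. strictly_convex_on simplexY (\<Phi> \<theta>)" and eta: "\<eta> > 0"
  shows "\<exists>\<kappa>>0. \<forall>\<theta> y y'. y \<in> simplexY \<and> y' \<in> simplexY \<and> \<eta> \<le> dist y y' \<longrightarrow> \<kappa> \<le> Gm c \<theta> y y'"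
proof -
  have "\<exists>\<kappa>>0. \<forall>y y'. y \<in> simplexY \<and> y' \<in> simplexY \<and> \<eta> \<le> dist y y' \<longrightarrow> \<kappa> \<le> Gm c \<theta> y y'" for \<theta>
  proof -
    define S where "S = {z \<in> (simplexY :: (real^'a) set) \<times> simplexY. \<eta> \<le> dist (fst z) (snd z)}"
    have cS: "compact S"
    proof -
      have c1: "closed {z::(real^'a)\<times>(real^'a). \<eta> \<le> dist (fst z) (snd z)}"
        by (intro closed_Collect_le continuous_intros)
      have c2: "compact ((simplexY :: (real^'a) set) \<times> simplexY)"
        by (intro compact_Times compact_simplex)
      have "S = (simplexY \<times> simplexY) \<inter> {z. \<eta> \<le> dist (fst z) (snd z)}"
        unfolding S_def by auto
      then show ?thesis using compact_Int_closed[OF c2 c1] by simp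
    qed
    have cc: "continuous_on (simplexY \<times> simplexY) (\<lambda>z. c a (f z) \<theta>)"
      if "continuous_on (simplexY \<times> simplexY) f" "f ` (simplexY \<times> simplexY) \<subseteq> simplexY" for a f
      by (rule continuous_on_compose2[of simplexY "\<lambda>y. c a y \<theta>"]) (use game that in \<open>auto simp: basic_game_def\<close>)
    have cont: "continuous_on S (\<lambda>z. Gm c \<theta> (fst z) (snd z))"
    proof (rule continuous_on_subset[of "simplexY \<times> simplexY"])
      show "continuous_on (simplexY \<times> simplexY) (\<lambda>z. Gm c \<theta> (fst z) (snd z))"
        unfolding Gm_def
        by (intro continuous_intros cc) auto
    qed (auto simp: S_def)
    show ?thesis
    proof (cases "S = {}")
      case True
      then show ?thesis unfolding S_def by (intro exI[of _ 1]) auto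
    next
      case False
      obtain z where z: "z \<in> S" and zmin: "\<forall>w\<in>S. Gm c \<theta> (fst z) (snd z) \<le> Gm c \<theta> (fst w) (snd w)"
        using continuous_attains_inf[OF cS False cont] by blast
      have "Gm c \<theta> (fst z) (snd z) > 0"
        using z eta unfolding S_def by (intro Gm_pos[OF pot sc[rule_format]]) auto
      then show ?thesis using zmin unfolding S_def by (intro exI[of _ "Gm c \<theta> (fst z) (snd z)"]) auto
    qed
  qed
  then obtain k where k: "\<And>\<theta>. k \<theta> > 0"
    "\<And>\<theta> y y'. y \<in> simplexY \<and> y' \<in> simplexY \<and> \<eta> \<le> dist y y' \<Longrightarrow> k \<theta> \<le> Gm c \<theta> y y'"
    by metis
  have "Min (range k) > 0" using k(1) by (subst Min_gr_iff) auto
  moreover have "Min (range k) \<le> k \<theta>" for \<theta> by (rule Min_le) auto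
  ultimately show ?thesis using k(2) by (intro exI[of _ "Min (range k)"]) (meson order_trans)
qed




lemma sum_fiber:
  assumes "finite S"
  shows "(\<Sum>t\<in>(UNIV::'a::finite set). \<Sum>\<tau>\<in>{\<tau>\<in>S. \<tau> k = t}. F t \<tau>) = (\<Sum>\<tau>\<in>S. F (\<tau> k) \<tau>)"
proof -
  have "(\<Sum>t\<in>(UNIV::'a set). \<Sum>\<tau>\<in>{\<tau>\<in>S. \<tau> k = t}. F t \<tau>)
      = (\<Sum>t\<in>(UNIV::'a set). \<Sum>\<tau>\<in>S. if \<tau> k = t then F t \<tau> else 0)"
    using assms by (simp add: sum.inter_filter)
  also have "\<dots> = (\<Sum>\<tau>\<in>S. \<Sum>t\<in>(UNIV::'a set). if \<tau> k = t then F t \<tau> else 0)"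
    by (rule sum.swap)
  also have "\<dots> = (\<Sum>\<tau>\<in>S. F (\<tau> k) \<tau>)"
    by (intro sum.cong refl) (simp add: sum.delta)
  finally show ?thesis .
qed

lemma finite_type_profiles: "finite K \<Longrightarrow> finite (type_profiles K :: (nat \<Rightarrow> 'a::finite) set)"
  unfolding type_profiles_def by (rule finite_PiE) auto

lemma total_flow_comp: "total_flow K yh \<tau> $ a = (\<Sum>k\<in>K. yh k (\<tau> k) $ a)"
  unfolding total_flow_def by (simp add: sum_component)

lemma total_flow_simplex:
  assumes "direct_info K gam tp" "interim_profile K gam yh"
  shows "total_flow K yh \<tau> \<in> simplexY"
proof -
  have "\<forall>a. 0 \<le> total_flow K yh \<tau> $ a"
    using assms unfolding total_flow_comp interim_profile_def simplex_gamma_def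
    by (auto intro!: sum_nonneg)
  moreover have "(\<Sum>a\<in>UNIV. total_flow K yh \<tau> $ a) = 1"
  proof -
    have "(\<Sum>a\<in>UNIV. total_flow K yh \<tau> $ a) = (\<Sum>k\<in>K. \<Sum>a\<in>UNIV. yh k (\<tau> k) $ a)"
      unfolding total_flow_comp by (rule sum.swap)
    also have "\<dots> = (\<Sum>k\<in>K. gam k)"
      using assms unfolding interim_profile_def simplex_gamma_def by (intro sum.cong) auto
    finally show ?thesis using assms unfolding direct_info_def by simp
  qed
  ultimately show ?thesis unfolding simplex_gamma_def by auto
qed




lemma expand:
  fixes c :: "'a::finite \<Rightarrow> real^'a \<Rightarrow> 't::finite \<Rightarrow> real" and p :: "'t \<Rightarrow> real"
    and tp :: "'t \<Rightarrow> (nat \<Rightarrow> 'a) pmf"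
  assumes K: "finite K"
  shows "(\<Sum>\<theta>\<in>UNIV. p \<theta> * (\<Sum>\<tau>\<in>type_profiles K. pmf (tp \<theta>) \<tau> * Gm c \<theta> (total_flow K yh \<tau>) (total_flow K ys \<tau>)))
    = (\<Sum>k\<in>K. \<Sum>t\<in>UNIV. \<Sum>a\<in>UNIV. (yh k t $ a - ys k t $ a) *
         (interim_cost p c K tp yh k t a - interim_cost p c K tp ys k t a))"
proof -
  define TP where "TP = (type_profiles K :: (nat \<Rightarrow> 'a) set)"
  have TP: "finite TP" unfolding TP_def using K by (rule finite_type_profiles)
  define D where "D \<theta> \<tau> a = c a (total_flow K yh \<tau>) \<theta> - c a (total_flow K ys \<tau>) \<theta>" for \<theta> \<tau> a
  define W where "W \<theta> \<tau> = p \<theta> * pmf (tp \<theta>) \<tau>" for \<theta> \<tau>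
  define d where "d k t a = yh k t $ a - ys k t $ a" for k t a
  define X where "X k \<theta> \<tau> a = d k (\<tau> k) a * (W \<theta> \<tau> * D \<theta> \<tau> a)" for k \<theta> \<tau> a
  have 1: "interim_cost p c K tp yh k t a - interim_cost p c K tp ys k t a
      = (\<Sum>\<theta>\<in>UNIV. \<Sum>\<tau>\<in>{\<tau>\<in>TP. \<tau> k = t}. W \<theta> \<tau> * D \<theta> \<tau> a)" for k t a
    unfolding interim_cost_def TP_def W_def D_def
    by (simp add: sum_subtractf[symmetric] algebra_simps)
  have "(\<Sum>\<theta>\<in>UNIV. p \<theta> * (\<Sum>\<tau>\<in>TP. pmf (tp \<theta>) \<tau> * Gm c \<theta> (total_flow K yh \<tau>) (total_flow K ys \<tau>)))
      = (\<Sum>\<theta>\<in>UNIV. \<Sum>\<tau>\<in>TP. \<Sum>a\<in>UNIV. \<Sum>k\<in>K. X k \<theta> \<tau> a)"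
    unfolding Gm_def total_flow_comp X_def d_def W_def D_def
    by (simp add: sum_distrib_left sum_distrib_right sum_subtractf[symmetric] algebra_simps)
  also have "\<dots> = (\<Sum>\<theta>\<in>UNIV. \<Sum>\<tau>\<in>TP. \<Sum>k\<in>K. \<Sum>a\<in>UNIV. X k \<theta> \<tau> a)"
    by (rule sum.cong[OF refl], rule sum.cong[OF refl], rule sum.swap)
  also have "\<dots> = (\<Sum>\<theta>\<in>UNIV. \<Sum>k\<in>K. \<Sum>\<tau>\<in>TP. \<Sum>a\<in>UNIV. X k \<theta> \<tau> a)"
    by (rule sum.cong[OF refl], rule sum.swap)
  also have "\<dots> = (\<Sum>k\<in>K. \<Sum>\<theta>\<in>UNIV. \<Sum>\<tau>\<in>TP. \<Sum>a\<in>UNIV. X k \<theta> \<tau> a)"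
    by (rule sum.swap)
  also have "\<dots> = (\<Sum>k\<in>K. \<Sum>\<theta>\<in>UNIV. \<Sum>t\<in>UNIV. \<Sum>\<tau>\<in>{\<tau>\<in>TP. \<tau> k = t}. \<Sum>a\<in>UNIV. d k t a * (W \<theta> \<tau> * D \<theta> \<tau> a))"
    unfolding X_def by (rule sum.cong[OF refl], rule sum.cong[OF refl], rule sum_fiber[OF TP, symmetric])
  also have "\<dots> = (\<Sum>k\<in>K. \<Sum>t\<in>UNIV. \<Sum>\<theta>\<in>UNIV. \<Sum>\<tau>\<in>{\<tau>\<in>TP. \<tau> k = t}. \<Sum>a\<in>UNIV. d k t a * (W \<theta> \<tau> * D \<theta> \<tau> a))"
    by (rule sum.cong[OF refl], rule sum.swap)
  also have "\<dots> = (\<Sum>k\<in>K. \<Sum>t\<in>UNIV. \<Sum>\<theta>\<in>UNIV. \<Sum>a\<in>UNIV. \<Sum>\<tau>\<in>{\<tau>\<in>TP. \<tau> k = t}. d k t a * (W \<theta> \<tau> * D \<theta> \<tau> a))"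
    by (rule sum.cong[OF refl], rule sum.cong[OF refl], rule sum.cong[OF refl], rule sum.swap)
  also have "\<dots> = (\<Sum>k\<in>K. \<Sum>t\<in>UNIV. \<Sum>a\<in>UNIV. \<Sum>\<theta>\<in>UNIV. \<Sum>\<tau>\<in>{\<tau>\<in>TP. \<tau> k = t}. d k t a * (W \<theta> \<tau> * D \<theta> \<tau> a))"
    by (rule sum.cong[OF refl], rule sum.cong[OF refl], rule sum.swap)
  also have "\<dots> = (\<Sum>k\<in>K. \<Sum>t\<in>UNIV. \<Sum>a\<in>UNIV. d k t a *
         (interim_cost p c K tp yh k t a - interim_cost p c K tp ys k t a))"
    unfolding 1 by (simp add: sum_distrib_left)
  finally show ?thesis unfolding TP_def d_def .
qed




definition reg :: "('t::finite \<Rightarrow> real) \<Rightarrow> ('a::finite \<Rightarrow> real ^ 'a \<Rightarrow> 't \<Rightarrow> real) \<Rightarrow> nat set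
    \<Rightarrow> (nat \<Rightarrow> real) \<Rightarrow> ('t \<Rightarrow> (nat \<Rightarrow> 'a) pmf) \<Rightarrow> (nat \<Rightarrow> 'a \<Rightarrow> real ^ 'a) \<Rightarrow> real" where
  "reg p c K gam tp yh = (\<Sum>k\<in>K. \<Sum>t\<in>UNIV. (\<Sum>a\<in>UNIV. yh k t $ a * interim_cost p c K tp yh k t a)
      - gam k * Min (range (interim_cost p c K tp yh k t)))"

lemma simplex_sum_const:
  assumes "y \<in> simplex_gamma g"
  shows "(\<Sum>a\<in>UNIV. y $ a * r) = g * r"
proof -
  have "(\<Sum>a\<in>UNIV. y $ a) = g" using assms unfolding simplex_gamma_def by auto
  then show ?thesis by (simp add: sum_distrib_right[symmetric])
qed

lemma weighted_min:
  fixes f :: "'a::finite \<Rightarrow> real"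
  assumes "y \<in> simplex_gamma g"
  shows "(\<Sum>a\<in>UNIV. y $ a * f a) \<ge> g * Min (range f)"
proof -
  have "(\<Sum>a\<in>UNIV. y $ a) = g" using assms unfolding simplex_gamma_def by auto
  then have "g * Min (range f) = (\<Sum>a\<in>UNIV. y $ a * Min (range f))"
    by (simp add: sum_distrib_right[symmetric])
  also have "\<dots> \<le> (\<Sum>a\<in>UNIV. y $ a * f a)"
    using assms unfolding simplex_gamma_def by (intro sum_mono mult_left_mono) auto
  finally show ?thesis .
qed

lemma IP_nonneg:
  assumes "basic_game p c"
  shows "interim_prob p K tp k t \<ge> 0"
  using assms unfolding interim_prob_def basic_game_def
  by (intro sum_nonneg mult_nonneg_nonneg) (auto simp: less_imp_le)

lemma IC_zero:
  fixes c :: "'a::finite \<Rightarrow> real^'a \<Rightarrow> 't::finite \<Rightarrow> real" and p :: "'t \<Rightarrow> real"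
  assumes g: "basic_game p c" and K: "finite K" and P: "interim_prob p K tp k t = 0"
  shows "interim_cost p c K tp yh k t a = 0"
proof -
  have fin: "finite {\<tau>\<in>type_profiles K. \<tau> k = t}" using finite_type_profiles[OF K] by auto
  have nn: "\<forall>\<theta> \<tau>. 0 \<le> p \<theta> * pmf (tp \<theta>) \<tau>" using g unfolding basic_game_def
    by (auto simp: less_imp_le)
  have "\<forall>\<theta>. (\<Sum>\<tau>\<in>{\<tau>\<in>type_profiles K. \<tau> k = t}. p \<theta> * pmf (tp \<theta>) \<tau>) = 0"
    using P unfolding interim_prob_def
    by (subst (asm) sum_nonneg_eq_0_iff) (auto intro!: sum_nonneg simp: nn)
  then have "\<forall>\<theta>. \<forall>\<tau>\<in>{\<tau>\<in>type_profiles K. \<tau> k = t}. p \<theta> * pmf (tp \<theta>) \<tau> = 0"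
    using fin by (subst (asm) sum_nonneg_eq_0_iff) (auto simp: nn)
  then show ?thesis unfolding interim_cost_def by (auto intro!: sum.neutral)
qed

lemma sum_IP:
  fixes c :: "'a::finite \<Rightarrow> real^'a \<Rightarrow> 't::finite \<Rightarrow> real" and p :: "'t \<Rightarrow> real"
    and tp :: "'t \<Rightarrow> (nat \<Rightarrow> 'a) pmf"
  assumes g: "basic_game p c" and d: "direct_info K gam tp"
  shows "(\<Sum>t\<in>UNIV. interim_prob p K tp k t) = 1"
proof -
  have K: "finite K" using d unfolding direct_info_def by auto
  have "(\<Sum>t\<in>UNIV. interim_prob p K tp k t)
     = (\<Sum>\<theta>\<in>UNIV. \<Sum>t\<in>UNIV. \<Sum>\<tau>\<in>{\<tau>\<in>type_profiles K. \<tau> k = t}. p \<theta> * pmf (tp \<theta>) \<tau>)"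
    unfolding interim_prob_def by (rule sum.swap)
  also have "\<dots> = (\<Sum>\<theta>\<in>UNIV. \<Sum>\<tau>\<in>type_profiles K. p \<theta> * pmf (tp \<theta>) \<tau>)"
    by (rule sum.cong[OF refl], rule sum_fiber[OF finite_type_profiles[OF K]])
  also have "\<dots> = (\<Sum>\<theta>\<in>UNIV. p \<theta>)"
  proof (rule sum.cong[OF refl])
    fix \<theta>
    have "sum (pmf (tp \<theta>)) (type_profiles K) = 1"
      using d finite_type_profiles[OF K] unfolding direct_info_def by (intro sum_pmf_eq_1) auto
    then show "(\<Sum>\<tau>\<in>type_profiles K. p \<theta> * pmf (tp \<theta>) \<tau>) = p \<theta>" by (simp add: sum_distrib_left[symmetric])
  qed
  also have "\<dots> = 1" using g unfolding basic_game_def by simp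
  finally show ?thesis .
qed

lemma eq_supp:
  fixes c :: "'a::finite \<Rightarrow> real^'a \<Rightarrow> 't::finite \<Rightarrow> real" and p :: "'t \<Rightarrow> real"
    and tp :: "'t \<Rightarrow> (nat \<Rightarrow> 'a) pmf"
  assumes g: "basic_game p c" and d: "direct_info K gam tp" and e: "BW_eps_eq p c K gam tp 0 ys"
    and k: "k \<in> K"
  shows "(\<Sum>a\<in>UNIV. ys k t $ a * interim_cost p c K tp ys k t a)
      = gam k * Min (range (interim_cost p c K tp ys k t))"
proof -
  have K: "finite K" using d unfolding direct_info_def by auto
  have ys: "ys k t \<in> simplex_gamma (gam k)" using e k unfolding BW_eps_eq_def interim_profile_def by auto
  show ?thesis
  proof (cases "interim_prob p K tp k t = 0")
    case True
    then show ?thesis using IC_zero[OF g K True] by simp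
  next
    case False
    then have P: "interim_prob p K tp k t > 0" using IP_nonneg[OF g, of K tp k t] by linarith
    have "(\<Sum>a\<in>UNIV. ys k t $ a * interim_cost p c K tp ys k t a)
        = (\<Sum>a\<in>UNIV. ys k t $ a * Min (range (interim_cost p c K tp ys k t)))"
    proof (rule sum.cong[OF refl])
      fix a
      show "ys k t $ a * interim_cost p c K tp ys k t a = ys k t $ a * Min (range (interim_cost p c K tp ys k t))"
      proof (cases "ys k t $ a > 0")
        case True
        then have "\<forall>b. interim_cost p c K tp ys k t a \<le> interim_cost p c K tp ys k t b"
          using e k P unfolding BW_eps_eq_def by auto
        then have "interim_cost p c K tp ys k t a = Min (range (interim_cost p c K tp ys k t))"
          by (intro antisym Min.boundedI Min_le) auto
        then show ?thesis by simp
      next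
        case False
        then have "ys k t $ a = 0" using ys unfolding simplex_gamma_def by (metis (mono_tags) mem_Collect_eq less_eq_real_def)
        then show ?thesis by simp
      qed
    qed
    also have "\<dots> = gam k * Min (range (interim_cost p c K tp ys k t))"
      using ys by (rule simplex_sum_const)
    finally show ?thesis .
  qed
qed

lemma reg_le:
  fixes c :: "'a::finite \<Rightarrow> real^'a \<Rightarrow> 't::finite \<Rightarrow> real" and p :: "'t \<Rightarrow> real"
    and tp :: "'t \<Rightarrow> (nat \<Rightarrow> 'a) pmf"
  assumes g: "basic_game p c" and d: "direct_info K gam tp" and e: "BW_eps_eq p c K gam tp \<alpha> yh"
    and al: "\<alpha> \<ge> 0"
  shows "reg p c K gam tp yh \<le> \<alpha>"
proof -
  have K: "finite K" using d unfolding direct_info_def by auto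
  have trm: "(\<Sum>a\<in>UNIV. yh k t $ a * interim_cost p c K tp yh k t a)
      - gam k * Min (range (interim_cost p c K tp yh k t)) \<le> gam k * (\<alpha> * interim_prob p K tp k t)"
    if k: "k \<in> K" for k t
  proof -
    have yh: "yh k t \<in> simplex_gamma (gam k)" using e k unfolding BW_eps_eq_def interim_profile_def by auto
    show ?thesis
    proof (cases "interim_prob p K tp k t = 0")
      case True
      then show ?thesis using IC_zero[OF g K True] by simp
    next
      case False
      then have P: "interim_prob p K tp k t > 0" using IP_nonneg[OF g, of K tp k t] by linarith
      define m where "m = Min (range (interim_cost p c K tp yh k t))"
      have "m \<in> range (interim_cost p c K tp yh k t)" unfolding m_def by (rule Min_in) auto
      then obtain b where b: "interim_cost p c K tp yh k t b = m" by (metis imageE)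
      have "(\<Sum>a\<in>UNIV. yh k t $ a * interim_cost p c K tp yh k t a)
          \<le> (\<Sum>a\<in>UNIV. yh k t $ a * (m + \<alpha> * interim_prob p K tp k t))"
      proof (rule sum_mono)
        fix a
        show "yh k t $ a * interim_cost p c K tp yh k t a \<le> yh k t $ a * (m + \<alpha> * interim_prob p K tp k t)"
        proof (cases "yh k t $ a > 0")
          case True
          then have "interim_cost p c K tp yh k t a \<le> m + \<alpha> * interim_prob p K tp k t"
            using e k P b unfolding BW_eps_eq_def by metis
          then show ?thesis using True by (simp add: mult_left_mono)
        next
          case False
          then have "yh k t $ a = 0" using yh unfolding simplex_gamma_def by (metis (mono_tags) mem_Collect_eq less_eq_real_def)
          then show ?thesis by simp
        qed
      qed
      also have "\<dots> = gam k * (m + \<alpha> * interim_prob p K tp k t)"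
        using yh by (rule simplex_sum_const)
      finally show ?thesis unfolding m_def by (simp add: algebra_simps)
    qed
  qed
  have "reg p c K gam tp yh \<le> (\<Sum>k\<in>K. \<Sum>t\<in>UNIV. gam k * (\<alpha> * interim_prob p K tp k t))"
    unfolding reg_def by (intro sum_mono trm)
  also have "\<dots> = (\<Sum>k\<in>K. gam k * \<alpha> * (\<Sum>t\<in>UNIV. interim_prob p K tp k t))"
    by (simp add: sum_distrib_left mult.assoc)
  also have "\<dots> = \<alpha>" using sum_IP[OF g d] d unfolding direct_info_def
    by (simp add: sum_distrib_right[symmetric])
  finally show ?thesis .
qed

lemma key_ineq:
  fixes c :: "'a::finite \<Rightarrow> real^'a \<Rightarrow> 't::finite \<Rightarrow> real" and p :: "'t \<Rightarrow> real"
    and tp :: "'t \<Rightarrow> (nat \<Rightarrow> 'a) pmf"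
  assumes g: "basic_game p c" and d: "direct_info K gam tp" and yh: "interim_profile K gam yh"
    and e: "BW_eps_eq p c K gam tp 0 ys"
  shows "(\<Sum>\<theta>\<in>UNIV. p \<theta> * (\<Sum>\<tau>\<in>type_profiles K. pmf (tp \<theta>) \<tau> * Gm c \<theta> (total_flow K yh \<tau>) (total_flow K ys \<tau>)))
      \<le> reg p c K gam tp yh"
proof -
  have K: "finite K" using d unfolding direct_info_def by auto
  have trm: "(\<Sum>a\<in>UNIV. (yh k t $ a - ys k t $ a) *
         (interim_cost p c K tp yh k t a - interim_cost p c K tp ys k t a))
      \<le> (\<Sum>a\<in>UNIV. yh k t $ a * interim_cost p c K tp yh k t a)
      - gam k * Min (range (interim_cost p c K tp yh k t))" if k: "k \<in> K" for k t
  proof -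
    have yk: "yh k t \<in> simplex_gamma (gam k)" using yh k unfolding interim_profile_def by auto
    have sk: "ys k t \<in> simplex_gamma (gam k)" using e k unfolding BW_eps_eq_def interim_profile_def by auto
    have "(\<Sum>a\<in>UNIV. (yh k t $ a - ys k t $ a) *
         (interim_cost p c K tp yh k t a - interim_cost p c K tp ys k t a))
      = (\<Sum>a\<in>UNIV. yh k t $ a * interim_cost p c K tp yh k t a)
        - (\<Sum>a\<in>UNIV. ys k t $ a * interim_cost p c K tp yh k t a)
        - ((\<Sum>a\<in>UNIV. yh k t $ a * interim_cost p c K tp ys k t a)
        - (\<Sum>a\<in>UNIV. ys k t $ a * interim_cost p c K tp ys k t a))"
      by (simp add: sum_subtractf[symmetric] algebra_simps)
    moreover have "(\<Sum>a\<in>UNIV. ys k t $ a * interim_cost p c K tp yh k t a) \<ge> gam k * Min (range (interim_cost p c K tp yh k t))"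
      by (rule weighted_min[OF sk])
    moreover have "(\<Sum>a\<in>UNIV. yh k t $ a * interim_cost p c K tp ys k t a) \<ge> gam k * Min (range (interim_cost p c K tp ys k t))"
      by (rule weighted_min[OF yk])
    moreover have "(\<Sum>a\<in>UNIV. ys k t $ a * interim_cost p c K tp ys k t a) = gam k * Min (range (interim_cost p c K tp ys k t))"
      by (rule eq_supp[OF g d e k])
    ultimately show ?thesis by linarith
  qed
  show ?thesis unfolding expand[OF K] reg_def by (intro sum_mono trm)
qed




lemma BW_exp:
  fixes tp :: "'t \<Rightarrow> (nat \<Rightarrow> 'a::finite) pmf" and f :: "real^'a \<Rightarrow> real"
  assumes d: "direct_info K gam tp"
  shows "measure_pmf.expectation (BW_outcome K tp yh \<theta>) f
       = (\<Sum>\<tau>\<in>type_profiles K. pmf (tp \<theta>) \<tau> * f (total_flow K yh \<tau>))"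
proof -
  have K: "finite K" using d unfolding direct_info_def by auto
  have "measure_pmf.expectation (BW_outcome K tp yh \<theta>) f
      = measure_pmf.expectation (tp \<theta>) (\<lambda>\<tau>. f (total_flow K yh \<tau>))"
    unfolding BW_outcome_def by simp
  also have "\<dots> = (\<Sum>\<tau>\<in>type_profiles K. pmf (tp \<theta>) \<tau> *\<^sub>R f (total_flow K yh \<tau>))"
    by (rule integral_measure_pmf[OF finite_type_profiles[OF K]]) (use d in \<open>auto simp: direct_info_def\<close>)
  finally show ?thesis by simp
qed

lemma Gm_sum_nonneg:
  fixes c :: "'a::finite \<Rightarrow> real^'a \<Rightarrow> 't::finite \<Rightarrow> real" and p :: "'t \<Rightarrow> real"
    and tp :: "'t \<Rightarrow> (nat \<Rightarrow> 'a) pmf"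
  assumes g: "basic_game p c" and pot: "is_potential c \<Phi>" and sc: "\<forall>\<theta>. strictly_convex_on simplexY (\<Phi> \<theta>)"
    and d: "direct_info K gam tp" and yh: "interim_profile K gam yh" and ys: "interim_profile K gam ys"
  shows "0 \<le> pmf (tp \<theta>) \<tau> * Gm c \<theta> (total_flow K yh \<tau>) (total_flow K ys \<tau>)"
  by (intro mult_nonneg_nonneg pmf_nonneg Gm_nonneg[OF pot sc[rule_format]] total_flow_simplex[OF d] yh ys)

lemma Gm_sum_bound:
  fixes c :: "'a::finite \<Rightarrow> real^'a \<Rightarrow> 't::finite \<Rightarrow> real" and p :: "'t \<Rightarrow> real"
    and tp :: "'t \<Rightarrow> (nat \<Rightarrow> 'a) pmf"
  assumes g: "basic_game p c" and pot: "is_potential c \<Phi>" and sc: "\<forall>\<theta>. strictly_convex_on simplexY (\<Phi> \<theta>)"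
    and d: "direct_info K gam tp" and yh: "interim_profile K gam yh" and e: "BW_eps_eq p c K gam tp 0 ys"
  shows "p \<theta> * (\<Sum>\<tau>\<in>type_profiles K. pmf (tp \<theta>) \<tau> * Gm c \<theta> (total_flow K yh \<tau>) (total_flow K ys \<tau>))
      \<le> reg p c K gam tp yh"
proof -
  have ys: "interim_profile K gam ys" using e unfolding BW_eps_eq_def by auto
  define h where "h \<theta> = p \<theta> * (\<Sum>\<tau>\<in>type_profiles K. pmf (tp \<theta>) \<tau> * Gm c \<theta> (total_flow K yh \<tau>) (total_flow K ys \<tau>))" for \<theta>
  have nn: "0 \<le> h \<theta>" for \<theta>
    unfolding h_def using g unfolding basic_game_def
    by (intro mult_nonneg_nonneg sum_nonneg Gm_sum_nonneg[OF g pot sc d yh ys]) (auto simp: less_imp_le)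
  have "h \<theta> \<le> (\<Sum>\<theta>\<in>UNIV. h \<theta>)" by (rule member_le_sum) (auto simp: nn)
  also have "\<dots> \<le> reg p c K gam tp yh" unfolding h_def by (rule key_ineq[OF g d yh e])
  finally show ?thesis unfolding h_def .
qed

lemma unique_outcome:
  fixes c :: "'a::finite \<Rightarrow> real^'a \<Rightarrow> 't::finite \<Rightarrow> real" and p :: "'t \<Rightarrow> real"
    and tp :: "'t \<Rightarrow> (nat \<Rightarrow> 'a) pmf"
  assumes g: "basic_game p c" and pot: "is_potential c \<Phi>" and sc: "\<forall>\<theta>. strictly_convex_on simplexY (\<Phi> \<theta>)"
    and d: "direct_info K gam tp" and e1: "BW_eps_eq p c K gam tp 0 y1" and e2: "BW_eps_eq p c K gam tp 0 y2"
  shows "BW_outcome K tp y1 = BW_outcome K tp y2"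
proof
  fix \<theta>
  have K: "finite K" using d unfolding direct_info_def by auto
  have y1: "interim_profile K gam y1" using e1 unfolding BW_eps_eq_def by auto
  have y2: "interim_profile K gam y2" using e2 unfolding BW_eps_eq_def by auto
  have "p \<theta> * (\<Sum>\<tau>\<in>type_profiles K. pmf (tp \<theta>) \<tau> * Gm c \<theta> (total_flow K y1 \<tau>) (total_flow K y2 \<tau>)) \<le> 0"
    using order_trans[OF Gm_sum_bound[OF g pot sc d y1 e2, of \<theta>] reg_le[OF g d e1 order_refl]] .
  moreover have "p \<theta> > 0" using g unfolding basic_game_def by auto
  ultimately have "(\<Sum>\<tau>\<in>type_profiles K. pmf (tp \<theta>) \<tau> * Gm c \<theta> (total_flow K y1 \<tau>) (total_flow K y2 \<tau>)) \<le> 0"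
    by (simp add: mult_le_0_iff)
  then have z: "\<forall>\<tau>\<in>type_profiles K. pmf (tp \<theta>) \<tau> * Gm c \<theta> (total_flow K y1 \<tau>) (total_flow K y2 \<tau>) = 0"
    using Gm_sum_nonneg[OF g pot sc d y1 y2] finite_type_profiles[OF K]
    by (metis (no_types, lifting) antisym sum_nonneg sum_nonneg_eq_0_iff)
  show "BW_outcome K tp y1 \<theta> = BW_outcome K tp y2 \<theta>"
    unfolding BW_outcome_def
  proof (rule map_pmf_cong[OF refl])
    fix \<tau> assume \<tau>: "\<tau> \<in> set_pmf (tp \<theta>)"
    then have "\<tau> \<in> type_profiles K" using d unfolding direct_info_def by auto
    moreover have "pmf (tp \<theta>) \<tau> \<noteq> 0" using \<tau> by (simp add: set_pmf_eq)
    ultimately have "Gm c \<theta> (total_flow K y1 \<tau>) (total_flow K y2 \<tau>) = 0" using z by auto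
    then show "total_flow K y1 \<tau> = total_flow K y2 \<tau>"
      using Gm_pos[OF pot sc[rule_format, of \<theta>] total_flow_simplex[OF d y1, of \<tau>] total_flow_simplex[OF d y2, of \<tau>]] by fastforce
  qed
qed

lemma close_outcomes:
  fixes c :: "'a::finite \<Rightarrow> real^'a \<Rightarrow> 't::finite \<Rightarrow> real" and p :: "'t \<Rightarrow> real"
    and tp :: "'t \<Rightarrow> (nat \<Rightarrow> 'a) pmf" and f :: "real^'a \<Rightarrow> real"
  assumes g: "basic_game p c" and pot: "is_potential c \<Phi>" and sc: "\<forall>\<theta>. strictly_convex_on simplexY (\<Phi> \<theta>)"
    and d: "direct_info K gam tp" and yh: "interim_profile K gam yh" and e: "BW_eps_eq p c K gam tp 0 ys"
    and r: "reg p c K gam tp yh \<le> r"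
    and M: "\<forall>y\<in>simplexY. \<bar>f y\<bar> \<le> M"
    and \<zeta>: "\<zeta> \<ge> 0" "\<forall>y\<in>simplexY. \<forall>y'\<in>simplexY. dist y y' < \<eta> \<longrightarrow> \<bar>f y - f y'\<bar> \<le> \<zeta>"
    and \<kappa>: "\<kappa> > 0" "\<forall>y\<in>simplexY. \<forall>y'\<in>simplexY. \<eta> \<le> dist y y' \<longrightarrow> \<kappa> \<le> Gm c \<theta> y y'"
  shows "\<bar>measure_pmf.expectation (BW_outcome K tp yh \<theta>) f - measure_pmf.expectation (BW_outcome K tp ys \<theta>) f\<bar>
      \<le> \<zeta> + 2 * M * r / (p \<theta> * \<kappa>)"
proof -
  have K: "finite K" using d unfolding direct_info_def by auto
  have ys: "interim_profile K gam ys" using e unfolding BW_eps_eq_def by auto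
  define TP where "TP = (type_profiles K :: (nat \<Rightarrow> 'a) set)"
  define y where "y \<tau> = total_flow K yh \<tau>" for \<tau>
  define z where "z \<tau> = total_flow K ys \<tau>" for \<tau>
  have yY: "y \<tau> \<in> simplexY" and zY: "z \<tau> \<in> simplexY" for \<tau>
    unfolding y_def z_def by (intro total_flow_simplex[OF d] yh ys)+
  have M0: "0 \<le> M" using M yY by (meson abs_ge_zero order_trans)
  have pt: "\<bar>f (y \<tau>) - f (z \<tau>)\<bar> \<le> \<zeta> + (2 * M / \<kappa>) * Gm c \<theta> (y \<tau>) (z \<tau>)" for \<tau>
  proof (cases "dist (y \<tau>) (z \<tau>) < \<eta>")
    case True
    have "0 \<le> (2 * M / \<kappa>) * Gm c \<theta> (y \<tau>) (z \<tau>)"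
      using M0 \<kappa>(1) Gm_nonneg[OF pot sc[rule_format] yY zY] by simp
    then show ?thesis using \<zeta>(2) yY zY True by fastforce
  next
    case False
    then have k: "\<kappa> \<le> Gm c \<theta> (y \<tau>) (z \<tau>)" using \<kappa>(2) yY zY by auto
    have "\<bar>f (y \<tau>) - f (z \<tau>)\<bar> \<le> 2 * M" using M yY zY by (smt (verit))
    also have "\<dots> = (2 * M / \<kappa>) * \<kappa>" using \<kappa>(1) by simp
    also have "\<dots> \<le> (2 * M / \<kappa>) * Gm c \<theta> (y \<tau>) (z \<tau>)"
      using k M0 \<kappa>(1) by (intro mult_left_mono) auto
    finally show ?thesis using \<zeta>(1) by simp
  qed
  have sp: "(\<Sum>\<tau>\<in>TP. pmf (tp \<theta>) \<tau>) = 1"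
    unfolding TP_def using d finite_type_profiles[OF K] unfolding direct_info_def by (intro sum_pmf_eq_1) auto
  have gb: "p \<theta> * (\<Sum>\<tau>\<in>TP. pmf (tp \<theta>) \<tau> * Gm c \<theta> (y \<tau>) (z \<tau>)) \<le> r"
    using Gm_sum_bound[OF g pot sc d yh e, of \<theta>] r unfolding TP_def y_def z_def by simp
  have p0: "p \<theta> > 0" using g unfolding basic_game_def by auto
  have gb': "(\<Sum>\<tau>\<in>TP. pmf (tp \<theta>) \<tau> * Gm c \<theta> (y \<tau>) (z \<tau>)) \<le> r / p \<theta>"
    using gb p0 by (simp add: le_divide_eq mult.commute)
  have "\<bar>measure_pmf.expectation (BW_outcome K tp yh \<theta>) f - measure_pmf.expectation (BW_outcome K tp ys \<theta>) f\<bar>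
      = \<bar>\<Sum>\<tau>\<in>TP. pmf (tp \<theta>) \<tau> * (f (y \<tau>) - f (z \<tau>))\<bar>"
    unfolding BW_exp[OF d] TP_def y_def z_def by (simp add: sum_subtractf[symmetric] algebra_simps)
  also have "\<dots> \<le> (\<Sum>\<tau>\<in>TP. pmf (tp \<theta>) \<tau> * \<bar>f (y \<tau>) - f (z \<tau>)\<bar>)"
    by (rule order_trans[OF sum_abs]) (simp add: abs_mult)
  also have "\<dots> \<le> (\<Sum>\<tau>\<in>TP. pmf (tp \<theta>) \<tau> * (\<zeta> + (2 * M / \<kappa>) * Gm c \<theta> (y \<tau>) (z \<tau>)))"
    by (intro sum_mono mult_left_mono pt pmf_nonneg)
  also have "\<dots> = \<zeta> * (\<Sum>\<tau>\<in>TP. pmf (tp \<theta>) \<tau>) + (2 * M / \<kappa>) * (\<Sum>\<tau>\<in>TP. pmf (tp \<theta>) \<tau> * Gm c \<theta> (y \<tau>) (z \<tau>))"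
    by (simp add: sum.distrib sum_distrib_left algebra_simps)
  also have "\<dots> \<le> \<zeta> * 1 + (2 * M / \<kappa>) * (r / p \<theta>)"
    unfolding sp by (intro add_mono order_refl mult_left_mono[OF gb']) (use M0 \<kappa>(1) in simp)
  also have "\<dots> = \<zeta> + 2 * M * r / (p \<theta> * \<kappa>)" by simp
  finally show ?thesis .
qed




lemma compact_PiE_UNIV:
  assumes "\<And>i. compact (S i)"
  shows "compact (PiE UNIV S :: ('i \<Rightarrow> 'b::topological_space) set)"
proof -
  have "compactin (product_topology (\<lambda>i. euclidean) UNIV) (PiE UNIV S :: ('i \<Rightarrow> 'b) set)"
    using assms by (subst compactin_PiE) auto
  then show ?thesis unfolding euclidean_product_topology by simp
qed

lemma deriv_line:
  assumes "(f has_derivative (\<lambda>h. g \<bullet> h)) (at x)"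
  shows "((\<lambda>s. f (x + s *\<^sub>R w)) has_real_derivative (g \<bullet> w)) (at 0)"
proof -
  have lin: "((\<lambda>u::real. x + u *\<^sub>R w) has_derivative (\<lambda>u. u *\<^sub>R w)) (at 0)"
    by (auto intro!: derivative_eq_intros)
  have der0: "(f has_derivative (\<lambda>h. g \<bullet> h)) (at (x + (0::real) *\<^sub>R w))" using assms by simp
  have hd: "((\<lambda>s. f (x + s *\<^sub>R w)) has_derivative (\<lambda>u. g \<bullet> (u *\<^sub>R w))) (at 0)"
    by (rule has_derivative_compose[OF lin der0])
  have e: "(\<lambda>u. g \<bullet> (u *\<^sub>R w)) = (*) (g \<bullet> w)" by (auto simp: fun_eq_iff)
  show ?thesis using hd unfolding has_field_derivative_def e .
qed

lemma potential_grad: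
  assumes pot: "is_potential c \<Phi>"
  obtains grad where "\<And>\<theta> y. y \<in> simplexY \<Longrightarrow> (\<Phi> \<theta> has_derivative (\<lambda>h. grad \<theta> y \<bullet> h)) (at y)"
    "\<And>\<theta> y a. y \<in> simplexY \<Longrightarrow> grad \<theta> y $ a = c a y \<theta>"
proof -
  have "\<forall>\<theta>. \<exists>G. (\<forall>y\<in>simplexY. (\<Phi> \<theta> has_derivative (\<lambda>h. G y \<bullet> h)) (at y)) \<and> (\<forall>y\<in>simplexY. \<forall>a. G y $ a = c a y \<theta>)"
    using pot unfolding is_potential_def by blast
  then obtain grad where "\<forall>\<theta>. (\<forall>y\<in>simplexY. (\<Phi> \<theta> has_derivative (\<lambda>h. grad \<theta> y \<bullet> h)) (at y)) \<and> (\<forall>y\<in>simplexY. \<forall>a. grad \<theta> y $ a = c a y \<theta>)"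
    by metis
  then show ?thesis using that by blast
qed

lemma Phi_cont:
  assumes pot: "is_potential c \<Phi>"
  shows "continuous_on simplexY (\<Phi> \<theta>)"
proof -
  obtain grad where g: "\<And>\<theta> y. y \<in> simplexY \<Longrightarrow> (\<Phi> \<theta> has_derivative (\<lambda>h. grad \<theta> y \<bullet> h)) (at y)"
    using potential_grad[OF pot] by metis
  show ?thesis
    by (rule has_derivative_continuous_on[of _ _ "\<lambda>y h. grad \<theta> y \<bullet> h"]) (use g has_derivative_at_withinI in blast)
qed

definition profS :: "nat set \<Rightarrow> (nat \<Rightarrow> real) \<Rightarrow> (nat \<Rightarrow> 'a \<Rightarrow> real^'a::finite) set" where
  "profS K gam = PiE UNIV (\<lambda>k. PiE UNIV (\<lambda>t. if k \<in> K then simplex_gamma (gam k) else {0}))"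

lemma profS_compact: "compact (profS K gam)"
  unfolding profS_def by (intro compact_PiE_UNIV) (auto intro: compact_simplex)

lemma profS_profile: "yh \<in> profS K gam \<Longrightarrow> interim_profile K gam yh"
  unfolding profS_def interim_profile_def
proof (intro ballI allI)
  fix k t assume A: "yh \<in> (\<Pi>\<^sub>E k\<in>UNIV. UNIV \<rightarrow>\<^sub>E (if k \<in> K then simplex_gamma (gam k) else {0}))" "k \<in> K"
  have "yh k \<in> UNIV \<rightarrow>\<^sub>E (if k \<in> K then simplex_gamma (gam k) else {0})" using PiE_mem[OF A(1)] by simp
  then have "yh k t \<in> (if k \<in> K then simplex_gamma (gam k) else {0})" by (rule PiE_mem) simp
  then show "yh k t \<in> simplex_gamma (gam k)" using \<open>k \<in> K\<close> by simp
qed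

lemma profS_nonempty:
  assumes "\<forall>k\<in>K. 0 < gam k"
  shows "(\<lambda>k t. if k \<in> K then gam k *\<^sub>R axis (undefined::'a::finite) 1 else 0) \<in> profS K gam"
  using assms unfolding profS_def simplex_gamma_def
  by (auto simp: axis_def if_distrib sum.delta' less_imp_le cong: if_cong)




lemma exists_eq:
  fixes c :: "'a::finite \<Rightarrow> real^'a \<Rightarrow> 't::finite \<Rightarrow> real" and p :: "'t \<Rightarrow> real"
    and tp :: "'t \<Rightarrow> (nat \<Rightarrow> 'a) pmf"
  assumes g: "basic_game p c" and pot: "is_potential c \<Phi>" and d: "direct_info K gam tp"
  shows "\<exists>ys. BW_eps_eq p c K gam tp 0 ys"
proof -
  have K: "finite K" using d unfolding direct_info_def by auto
  define TP where "TP = (type_profiles K :: (nat \<Rightarrow> 'a) set)"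
  define S where "S = (profS K gam :: (nat \<Rightarrow> 'a \<Rightarrow> real^'a) set)"
  define Fp where "Fp yh = (\<Sum>\<theta>\<in>UNIV. p \<theta> * (\<Sum>\<tau>\<in>TP. pmf (tp \<theta>) \<tau> * \<Phi> \<theta> (total_flow K yh \<tau>)))"
    for yh :: "nat \<Rightarrow> 'a \<Rightarrow> real^'a"
  obtain grad where gr: "\<And>\<theta> y. y \<in> simplexY \<Longrightarrow> (\<Phi> \<theta> has_derivative (\<lambda>h. grad \<theta> y \<bullet> h)) (at y)"
    "\<And>\<theta> y a. y \<in> simplexY \<Longrightarrow> grad \<theta> y $ a = c a y \<theta>"
    using potential_grad[OF pot] by metis
  have ctf: "continuous_on S (\<lambda>yh. total_flow K yh \<tau>)" for \<tau>
  proof -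
    have c0: "continuous_on S (\<lambda>yh::nat\<Rightarrow>'a\<Rightarrow>real^'a. yh k)" for k
      using continuous_on_product_then_coordinatewise[of S "\<lambda>x. x" k] continuous_on_id by simp
    have c1: "continuous_on S (\<lambda>yh::nat\<Rightarrow>'a\<Rightarrow>real^'a. yh k j)" for k j
      using continuous_on_product_then_coordinatewise[OF c0[of k], of j] by simp
    show ?thesis unfolding total_flow_def by (rule continuous_on_sum) (rule c1)
  qed
  have tfY: "(\<lambda>yh. total_flow K yh \<tau>) ` S \<subseteq> simplexY" for \<tau>
    unfolding S_def using total_flow_simplex[OF d profS_profile] by auto
  have cont: "continuous_on S Fp"
    unfolding Fp_def
    by (intro continuous_intros continuous_on_compose2[OF Phi_cont[OF pot] ctf tfY])
  have Sne: "S \<noteq> {}" unfolding S_def using profS_nonempty[of K gam] d unfolding direct_info_def by blast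
  obtain ys where ysS: "ys \<in> S" and ysmin: "\<forall>yh\<in>S. Fp ys \<le> Fp yh"
    using continuous_attains_inf[OF _ Sne cont] profS_compact unfolding S_def by blast
  have ysP: "interim_profile K gam ys" using ysS unfolding S_def by (rule profS_profile)
  have "BW_eps_eq p c K gam tp 0 ys"
    unfolding BW_eps_eq_def
  proof (intro conjI ysP ballI allI impI)
    fix k t a b
    assume k: "k \<in> K" and P: "0 < interim_prob p K tp k t" and pos: "0 < ys k t $ a"
    show "interim_cost p c K tp ys k t a \<le> interim_cost p c K tp ys k t b + 0 * interim_prob p K tp k t"
    proof (rule ccontr)
      assume "\<not> ?thesis"
      then have lt: "interim_cost p c K tp ys k t b < interim_cost p c K tp ys k t a" by simp
      then have ab: "a \<noteq> b" by auto
      define v where "v = axis b (1::real) - axis a 1"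
      define w where "w \<tau> = (if \<tau> k = t then v else 0)" for \<tau> :: "nat \<Rightarrow> 'a"
      define yh where "yh s = ys(k := (ys k)(t := ys k t + s *\<^sub>R v))" for s :: real
      define \<phi> where "\<phi> s = (\<Sum>\<theta>\<in>UNIV. p \<theta> * (\<Sum>\<tau>\<in>TP. pmf (tp \<theta>) \<tau> * \<Phi> \<theta> (total_flow K ys \<tau> + s *\<^sub>R w \<tau>)))" for s
      have tf_upd: "total_flow K (yh s) \<tau> = total_flow K ys \<tau> + s *\<^sub>R w \<tau>" for s \<tau>
      proof -
        have "yh s j (\<tau> j) = ys j (\<tau> j) + (if j = k then s *\<^sub>R w \<tau> else 0)" for j
          unfolding yh_def w_def by auto
        then show ?thesis unfolding total_flow_def using k K by (simp add: sum.distrib)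
      qed
      have Fyh: "Fp (yh s) = \<phi> s" for s unfolding Fp_def \<phi>_def tf_upd ..
      have mem: "yh s \<in> S" if s: "0 \<le> s" "s \<le> ys k t $ a" for s
      proof -
        have old: "ys k' t' \<in> (if k' \<in> K then simplex_gamma (gam k') else {0})" for k' t'
        proof -
          have A: "ys \<in> (\<Pi>\<^sub>E k\<in>UNIV. UNIV \<rightarrow>\<^sub>E (if k \<in> K then simplex_gamma (gam k) else {0}))"
            using ysS unfolding S_def profS_def .
          have "ys k' \<in> UNIV \<rightarrow>\<^sub>E (if k' \<in> K then simplex_gamma (gam k') else {0})" using PiE_mem[OF A] by simp
          then show ?thesis using PiE_mem by fastforce
        qed
        have new: "ys k t + s *\<^sub>R v \<in> simplex_gamma (gam k)"
        proof -
          have o: "ys k t \<in> simplex_gamma (gam k)" using old[of k t] k by simp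
          have "0 \<le> (ys k t + s *\<^sub>R v) $ c'" for c'
            using o s ab unfolding simplex_gamma_def v_def by (auto simp: axis_def)
          moreover have "(\<Sum>c'\<in>UNIV. (ys k t + s *\<^sub>R v) $ c') = gam k"
          proof -
            have sa: "(\<Sum>c'\<in>UNIV. axis x (1::real) $ c') = 1" for x :: 'a
              by (simp add: axis_def)
            have "(\<Sum>c'\<in>UNIV. (ys k t + s *\<^sub>R v) $ c')
                = (\<Sum>c'\<in>UNIV. ys k t $ c') + s * ((\<Sum>c'\<in>UNIV. axis b (1::real) $ c') - (\<Sum>c'\<in>UNIV. axis a (1::real) $ c'))"
              unfolding v_def by (simp add: sum.distrib sum_subtractf sum_distrib_left[symmetric])
            also have "\<dots> = gam k" using o unfolding sa simplex_gamma_def by simp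
            finally show ?thesis .
          qed
          ultimately show ?thesis unfolding simplex_gamma_def by auto
        qed
        have o1: "ys k' t' \<in> simplex_gamma (gam k')" if "k' \<in> K" for k' t' using old[of k' t'] that by simp
        have o2: "ys k' t' = 0" if "k' \<notin> K" for k' t' using old[of k' t'] that by simp
        show ?thesis unfolding S_def profS_def yh_def using o1 o2 new k by (auto simp: PiE_iff)
      qed
      have yh0: "yh 0 = ys" unfolding yh_def by simp
      have deriv: "(\<phi> has_real_derivative
          (\<Sum>\<theta>\<in>UNIV. p \<theta> * (\<Sum>\<tau>\<in>TP. pmf (tp \<theta>) \<tau> * (grad \<theta> (total_flow K ys \<tau>) \<bullet> w \<tau>)))) (at 0)"
        unfolding \<phi>_def
        by (intro DERIV_sum DERIV_cmult deriv_line gr(1) total_flow_simplex[OF d ysP])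
      have "(\<Sum>\<theta>\<in>UNIV. p \<theta> * (\<Sum>\<tau>\<in>TP. pmf (tp \<theta>) \<tau> * (grad \<theta> (total_flow K ys \<tau>) \<bullet> w \<tau>)))
          = (\<Sum>\<theta>\<in>UNIV. \<Sum>\<tau>\<in>TP. if \<tau> k = t then p \<theta> * pmf (tp \<theta>) \<tau> *
               (c b (total_flow K ys \<tau>) \<theta> - c a (total_flow K ys \<tau>) \<theta>) else 0)"
        unfolding w_def v_def
        by (auto simp: sum_distrib_left inner_diff_right inner_axis gr(2)[OF total_flow_simplex[OF d ysP]]
              intro!: sum.cong)
      also have "\<dots> = (\<Sum>\<theta>\<in>UNIV. \<Sum>\<tau>\<in>{\<tau>\<in>TP. \<tau> k = t}. p \<theta> * pmf (tp \<theta>) \<tau> *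
               (c b (total_flow K ys \<tau>) \<theta> - c a (total_flow K ys \<tau>) \<theta>))"
        by (rule sum.cong[OF refl], rule sum.inter_filter[symmetric]) (simp add: TP_def finite_type_profiles[OF K])
      also have "\<dots> = interim_cost p c K tp ys k t b - interim_cost p c K tp ys k t a"
        unfolding interim_cost_def TP_def
        by (simp add: sum_subtractf[symmetric] algebra_simps)
      finally have deriv': "(\<phi> has_real_derivative (interim_cost p c K tp ys k t b - interim_cost p c K tp ys k t a)) (at 0)"
        using deriv by simp
      obtain dd where dd: "dd > 0" "\<forall>h>0. h < dd \<longrightarrow> \<phi> 0 > \<phi> (0 + h)"
        using DERIV_neg_dec_right[OF deriv'] lt by auto
      define h where "h = min (dd/2) (ys k t $ a)"
      have h: "0 < h" "h < dd" "h \<le> ys k t $ a" unfolding h_def using dd pos by auto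
      have "\<phi> h < \<phi> 0" using dd h by auto
      moreover have "Fp ys \<le> Fp (yh h)" using ysmin mem h by auto
      ultimately show False using Fyh[of h] Fyh[of 0] yh0 by simp
    qed
  qed
  then show ?thesis by blast
qed




definition cnt :: "nat \<Rightarrow> real^'a::finite \<Rightarrow> 'a \<Rightarrow> nat" where
  "cnt n y a = (if a = undefined then n - (\<Sum>b\<in>UNIV - {undefined}. nat \<lfloor>real n * y$b\<rfloor>)
                else nat \<lfloor>real n * y$a\<rfloor>)"

definition zm :: "nat \<Rightarrow> ('a::finite \<Rightarrow> nat) \<Rightarrow> real^'a" where
  "zm n m = (\<chi> a. real (m a) / real n)"

lemma nat_floor_le: "0 \<le> x \<Longrightarrow> real (nat \<lfloor>x\<rfloor>) \<le> x"
  by (simp add: of_nat_nat)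

lemma nat_floor_gt: "0 \<le> x \<Longrightarrow> x - 1 < real (nat \<lfloor>x\<rfloor>)"
  by (simp add: of_nat_nat)

lemma cnt_aux:
  assumes y: "y \<in> simplexY"
  shows "(\<Sum>b\<in>UNIV - {undefined}. nat \<lfloor>real n * (y::real^'a::finite)$b\<rfloor>) \<le> n"
proof -
  have y0: "\<forall>a. 0 \<le> y $ a" "(\<Sum>a\<in>UNIV. y $ a) = 1" using y unfolding simplex_gamma_def by auto
  have "real (\<Sum>b\<in>UNIV - {undefined}. nat \<lfloor>real n * y$b\<rfloor>) = (\<Sum>b\<in>UNIV - {undefined}. real (nat \<lfloor>real n * y$b\<rfloor>))"
    by simp
  also have "\<dots> \<le> (\<Sum>b\<in>UNIV - {undefined}. real n * y$b)"
    using y0 by (intro sum_mono nat_floor_le) auto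
  also have "\<dots> = real n * (\<Sum>b\<in>UNIV - {undefined}. y$b)" by (simp add: sum_distrib_left)
  also have "\<dots> \<le> real n * (\<Sum>b\<in>UNIV. y$b)"
    using y0 by (intro mult_left_mono sum_mono2) auto
  also have "\<dots> = real n" using y0 by simp
  finally have "real (\<Sum>b\<in>UNIV - {undefined}. nat \<lfloor>real n * y$b\<rfloor>) \<le> real n" .
  then show ?thesis by (simp only: of_nat_le_iff)
qed

lemma cnt_sum:
  assumes y: "y \<in> simplexY"
  shows "(\<Sum>a\<in>UNIV. cnt n (y::real^'a::finite) a) = n"
proof -
  have "(\<Sum>a\<in>UNIV. cnt n y a) = cnt n y undefined + (\<Sum>a\<in>UNIV - {undefined}. cnt n y a)"
    by (simp add: sum.remove)
  also have "(\<Sum>a\<in>UNIV - {undefined}. cnt n y a) = (\<Sum>b\<in>UNIV - {undefined}. nat \<lfloor>real n * y$b\<rfloor>)"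
    unfolding cnt_def by (intro sum.cong) auto
  finally show ?thesis using cnt_aux[OF y, of n] unfolding cnt_def by simp
qed

lemma zm_simplex:
  assumes "sum m UNIV = n" "n > 0"
  shows "zm n (m::'a::finite \<Rightarrow> nat) \<in> simplexY"
  using assms unfolding zm_def simplex_gamma_def
  by (auto simp: sum_divide_distrib[symmetric])

lemma zm_close:
  assumes y: "y \<in> simplexY" and n: "n > 0"
  shows "dist (zm n (cnt n y)) (y::real^'a::finite) \<le> real CARD('a) * real CARD('a) / real n"
proof -
  have y0: "\<forall>a. 0 \<le> y $ a" "(\<Sum>a\<in>UNIV. y $ a) = 1" using y unfolding simplex_gamma_def by auto
  have nn: "real n > 0" using n by simp
  have comp_other: "0 \<le> y$b - real (nat \<lfloor>real n * y$b\<rfloor>) / real n \<and> y$b - real (nat \<lfloor>real n * y$b\<rfloor>) / real n < 1 / real n" for b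
  proof -
    have "real (nat \<lfloor>real n * y$b\<rfloor>) \<le> real n * y$b" using y0 by (intro nat_floor_le) auto
    moreover have "real n * y$b - 1 < real (nat \<lfloor>real n * y$b\<rfloor>)" using y0 by (intro nat_floor_gt) auto
    ultimately have A: "real (nat \<lfloor>real n * y$b\<rfloor>) \<le> real n * y$b" and B: "real n * y$b - 1 < real (nat \<lfloor>real n * y$b\<rfloor>)" by auto
    have "real (nat \<lfloor>real n * y$b\<rfloor>) / real n \<le> real n * y$b / real n" using A nn by (intro divide_right_mono) auto
    moreover have "(real n * y$b - 1) / real n < real (nat \<lfloor>real n * y$b\<rfloor>) / real n" using B nn by (intro divide_strict_right_mono) auto
    moreover have "real n * y$b / real n = y$b" "(real n * y$b - 1) / real n = y$b - 1 / real n" using nn by (auto simp: diff_divide_distrib)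
    ultimately show ?thesis by auto
  qed
  have bnd: "\<bar>zm n (cnt n y) $ a - y $ a\<bar> \<le> real CARD('a) / real n" for a
  proof (cases "a = undefined")
    case False
    then have "\<bar>zm n (cnt n y) $ a - y $ a\<bar> \<le> 1 / real n"
      using comp_other[of a] unfolding zm_def cnt_def by auto
    also have "\<dots> \<le> real CARD('a) / real n" using nn
      by (intro divide_right_mono) (auto simp: Suc_le_eq)
    finally show ?thesis .
  next
    case True
    define s where "s = (\<Sum>b\<in>UNIV - {undefined}. nat \<lfloor>real n * y$b\<rfloor>)"
    have sn: "s \<le> n" unfolding s_def by (rule cnt_aux[OF y])
    have "zm n (cnt n y) $ a = (real n - real s) / real n"
      unfolding zm_def cnt_def True s_def[symmetric] using sn by (simp add: of_nat_diff)
    also have "\<dots> = 1 - (\<Sum>b\<in>UNIV - {undefined}. real (nat \<lfloor>real n * y$b\<rfloor>) / real n)"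
      using nn unfolding s_def by (simp add: diff_divide_distrib sum_divide_distrib[symmetric])
    finally have e1: "zm n (cnt n y) $ a = 1 - (\<Sum>b\<in>UNIV - {undefined}. real (nat \<lfloor>real n * y$b\<rfloor>) / real n)" .
    have e2: "y $ a = 1 - (\<Sum>b\<in>UNIV - {undefined}. y $ b)"
      using y0(2) True by (simp add: sum.remove[of UNIV undefined])
    have diff: "zm n (cnt n y) $ a - y $ a = (\<Sum>b\<in>UNIV - {undefined}. y$b - real (nat \<lfloor>real n * y$b\<rfloor>) / real n)"
      unfolding e1 e2 by (simp add: sum_subtractf)
    have "0 \<le> (\<Sum>b\<in>UNIV - {undefined}. y$b - real (nat \<lfloor>real n * y$b\<rfloor>) / real n)"
      using comp_other by (intro sum_nonneg) auto
    moreover have "(\<Sum>b\<in>UNIV - {undefined}. y$b - real (nat \<lfloor>real n * y$b\<rfloor>) / real n)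
        \<le> (\<Sum>b\<in>(UNIV::'a set) - {undefined}. 1 / real n)"
      using comp_other by (intro sum_mono) (auto intro: less_imp_le)
    moreover have "(\<Sum>b\<in>(UNIV::'a set) - {undefined}. 1 / real n) \<le> real CARD('a) / real n"
      using nn by (simp add: card_Diff_subset divide_right_mono)
    ultimately show ?thesis unfolding diff by auto
  qed
  have "dist (zm n (cnt n y)) y = norm (zm n (cnt n y) - y)" by (simp add: dist_norm)
  also have "\<dots> \<le> (\<Sum>a\<in>UNIV. \<bar>(zm n (cnt n y) - y) $ a\<bar>)" by (rule norm_le_l1_cart)
  also have "\<dots> \<le> (\<Sum>a\<in>(UNIV::'a set). real CARD('a) / real n)"
    by (intro sum_mono) (use bnd in simp)
  also have "\<dots> = real CARD('a) * real CARD('a) / real n" by simp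
  finally show ?thesis .
qed




lemma rot_inj:
  assumes n: "(n::nat) > 0"
  shows "inj_on (\<lambda>r. (k + r) mod n) {..<n}"
proof
  fix r r' assume r: "r \<in> {..<n}" and r': "r' \<in> {..<n}" and eq: "(k + r) mod n = (k + r') mod n"
  define cc where "cc = n - k mod n"
  have e: "k + x + cc = x + n * (k div n + 1)" for x
  proof -
    have d: "k = n * (k div n) + k mod n" by simp
    have m: "k mod n < n" using n by simp
    have "n * (k div n + 1) = n * (k div n) + n" by simp
    then show ?thesis unfolding cc_def using d m by linarith
  qed
  have bk: "((k + x) mod n + cc) mod n = x mod n" for x
  proof -
    have "((k + x) mod n + cc) mod n = (k + x + cc) mod n" by (simp add: mod_add_left_eq)
    also have "\<dots> = (x + n * (k div n + 1)) mod n" by (simp only: e)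
    also have "\<dots> = x mod n" by (metis mod_mult_self1 mult.commute)
    finally show ?thesis .
  qed
  have "r = r mod n" using r by simp
  also have "\<dots> = ((k + r) mod n + cc) mod n" by (rule bk[symmetric])
  also have "\<dots> = ((k + r') mod n + cc) mod n" by (simp add: eq)
  also have "\<dots> = r' mod n" by (rule bk)
  also have "\<dots> = r'" using r' by simp
  finally show "r = r'" .
qed

lemma exists_assign:
  "sum m (UNIV::'a::finite set) = n \<Longrightarrow> \<exists>\<sigma>::nat \<Rightarrow> 'a. \<forall>a. card {j\<in>{..<n}. \<sigma> j = a} = m a"
proof (induction n arbitrary: m)
  case 0
  then have "\<forall>a. m a = 0" by simp
  then show ?case by simp
next
  case (Suc n)
  have "\<exists>a1. m a1 > 0"
  proof (rule ccontr)
    assume "\<not> ?thesis"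
    then have "\<forall>a. m a = 0" by simp
    then show False using Suc.prems by simp
  qed
  then obtain a1 where a1: "m a1 > 0" by blast
  define m' where "m' = m(a1 := m a1 - 1)"
  have "sum m UNIV = m a1 + sum m (UNIV - {a1})" by (simp add: sum.remove)
  moreover have "sum m' UNIV = m' a1 + sum m' (UNIV - {a1})" by (simp add: sum.remove)
  moreover have "sum m' (UNIV - {a1}) = sum m (UNIV - {a1})" unfolding m'_def by (intro sum.cong) auto
  ultimately have "sum m' UNIV = n" using Suc.prems a1 unfolding m'_def by simp
  then obtain \<sigma>' where s': "\<forall>a. card {j\<in>{..<n}. \<sigma>' j = a} = m' a" using Suc.IH by blast
  define \<sigma> where "\<sigma> = \<sigma>'(n := a1)"
  have "card {j\<in>{..<Suc n}. \<sigma> j = a} = m a" for a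
  proof -
    have e: "{j\<in>{..<Suc n}. \<sigma> j = a} = {j\<in>{..<n}. \<sigma>' j = a} \<union> (if a1 = a then {n} else {})"
      unfolding \<sigma>_def by (auto simp: less_Suc_eq)
    have "card {j\<in>{..<Suc n}. \<sigma> j = a} = card {j\<in>{..<n}. \<sigma>' j = a} + (if a1 = a then 1 else 0)"
      unfolding e by (auto simp: card_Un_disjoint)
    then show ?thesis using s' a1 unfolding m'_def by auto
  qed
  then show ?case by blast
qed

definition sig :: "nat \<Rightarrow> ('a::finite \<Rightarrow> nat) \<Rightarrow> nat \<Rightarrow> 'a" where
  "sig n m = (SOME \<sigma>. \<forall>a. card {j\<in>{..<n}. \<sigma> j = a} = m a)"

lemma sig_card: "sum m UNIV = n \<Longrightarrow> card {j\<in>{..<n}. sig n m j = a} = m a"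
  unfolding sig_def using someI_ex[OF exists_assign] by blast

definition rho :: "nat \<Rightarrow> ('a::finite \<Rightarrow> nat) \<Rightarrow> nat \<Rightarrow> (nat \<Rightarrow> 'a)" where
  "rho n m r = restrict (\<lambda>k. sig n m ((k + r) mod n)) {..<n}"

lemma rho_tp: "rho n m r \<in> type_profiles {..<n}"
  unfolding rho_def type_profiles_def by auto

lemma rot_card:
  fixes n k :: nat
  assumes n: "n > 0"
  shows "card {r\<in>{..<n}. P ((k + r) mod n)} = card {j\<in>{..<n}. P j}"
proof -
  define f where "f r = (k + r) mod n" for r
  have inj: "inj_on f {..<n}" unfolding f_def by (rule rot_inj[OF n])
  have sub: "f ` {..<n} \<subseteq> {..<n}" unfolding f_def using n by auto
  have surj: "f ` {..<n} = {..<n}" by (rule endo_inj_surj[OF _ sub inj]) simp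
  have "f ` {r\<in>{..<n}. P (f r)} = {j\<in>{..<n}. P j}"
  proof
    show "f ` {r\<in>{..<n}. P (f r)} \<subseteq> {j\<in>{..<n}. P j}" using sub by auto
    show "{j\<in>{..<n}. P j} \<subseteq> f ` {r\<in>{..<n}. P (f r)}"
    proof
      fix j assume j: "j \<in> {j\<in>{..<n}. P j}"
      then obtain r where "r \<in> {..<n}" "j = f r" using surj by blast
      then show "j \<in> f ` {r\<in>{..<n}. P (f r)}" using j by auto
    qed
  qed
  moreover have "card (f ` {r\<in>{..<n}. P (f r)}) = card {r\<in>{..<n}. P (f r)}"
    by (rule card_image) (rule inj_on_subset[OF inj], auto)
  ultimately show ?thesis unfolding f_def by simp
qed

lemma rho_count:
  assumes m: "sum m UNIV = n" and n: "n > 0" and k: "k < n"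
  shows "card {r\<in>{..<n}. rho n m r k = t} = m t"
proof -
  have "{r\<in>{..<n}. rho n m r k = t} = {r\<in>{..<n}. sig n m ((k + r) mod n) = t}"
    unfolding rho_def using k by auto
  then show ?thesis using rot_card[OF n, where k=k and P="\<lambda>j. sig n m j = t"] sig_card[OF m] by simp
qed

lemma fiber_sum:
  assumes R: "finite R" and T: "finite T" and im: "f ` R \<subseteq> T"
  shows "(\<Sum>\<tau>\<in>T. real (card {r\<in>R. f r = \<tau>}) * G \<tau>) = (\<Sum>r\<in>R. G (f r))"
proof -
  have "real (card {r\<in>R. f r = \<tau>}) = (\<Sum>r\<in>R. if f r = \<tau> then 1 else 0)" for \<tau>
    using R by (simp add: sum.If_cases Int_def)
  then have "(\<Sum>\<tau>\<in>T. real (card {r\<in>R. f r = \<tau>}) * G \<tau>) = (\<Sum>\<tau>\<in>T. \<Sum>r\<in>R. if f r = \<tau> then G \<tau> else 0)"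
    by (auto simp: sum_distrib_right intro!: sum.cong)
  also have "\<dots> = (\<Sum>r\<in>R. \<Sum>\<tau>\<in>T. if f r = \<tau> then G \<tau> else 0)" by (rule sum.swap)
  also have "\<dots> = (\<Sum>r\<in>R. G (f r))" using T im by (intro sum.cong refl) (auto simp: sum.delta)
  finally show ?thesis .
qed

lemma total_flow_rho:
  assumes m: "sum m UNIV = n" and n: "n > 0"
  shows "total_flow {..<n} (\<lambda>k t. if k \<in> {..<n} then (1 / real n) *\<^sub>R axis t 1 else 0) (rho n m r) = zm n m"
proof -
  have "total_flow {..<n} (\<lambda>k t. if k \<in> {..<n} then (1 / real n) *\<^sub>R axis t 1 else 0) (rho n m r) $ a = zm n m $ a" for a
  proof -
    have "total_flow {..<n} (\<lambda>k t. if k \<in> {..<n} then (1 / real n) *\<^sub>R axis t 1 else 0) (rho n m r) $ a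
        = (\<Sum>k\<in>{..<n}. if rho n m r k = a then 1 / real n else 0)"
      unfolding total_flow_comp by (intro sum.cong) (auto simp: axis_def)
    also have "\<dots> = real (card {k\<in>{..<n}. rho n m r k = a}) / real n"
      by (simp add: sum.If_cases Int_def)
    also have "{k\<in>{..<n}. rho n m r k = a} = {k\<in>{..<n}. sig n m ((k + r) mod n) = a}"
      unfolding rho_def by auto
    also have "card \<dots> = card {j\<in>{..<n}. sig n m ((r + j) mod n) = a}"
      by (simp add: add.commute)
    also have "\<dots> = m a" using rot_card[OF n, where k=r and P="\<lambda>j. sig n m j = a"] sig_card[OF m] by simp
    finally show ?thesis unfolding zm_def by simp
  qed
  then show ?thesis by (simp add: vec_eq_iff)
qed




lemma ev_meas: "{y::real^'a::finite. \<forall>b\<in>UNIV - {undefined}. nat \<lfloor>real n * y $ b\<rfloor> = m b} \<in> sets borel"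
proof -
  have "{y::real^'a. \<forall>b\<in>UNIV - {undefined}. nat \<lfloor>real n * y $ b\<rfloor> = m b} = {y \<in> space borel. \<forall>b\<in>UNIV - {undefined}. nat \<lfloor>real n * y $ b\<rfloor> = m b}"
    by simp
  also have "\<dots> \<in> sets borel" by measurable
  finally show ?thesis .
qed

definition Mset :: "nat \<Rightarrow> ('a::finite \<Rightarrow> nat) set" where
  "Mset n = {m. sum m UNIV = n}"

lemma finite_Mset: "finite (Mset n :: ('a::finite \<Rightarrow> nat) set)"
proof -
  have "Mset n \<subseteq> PiE (UNIV::'a set) (\<lambda>_. {..n})"
    unfolding Mset_def by (auto simp: PiE_UNIV_domain intro: member_le_sum[of _ UNIV, simplified])
  moreover have "finite (PiE (UNIV::'a set) (\<lambda>_. {..n}))" by (intro finite_PiE) auto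
  ultimately show ?thesis by (rule finite_subset)
qed

lemma space_outcome:
  assumes "sets M = sets (restrict_space borel (simplexY :: (real^'a::finite) set))"
  shows "space M = simplexY"
  using sets_eq_imp_space_eq[OF assms] by (simp add: space_restrict_space)

lemma E_meas:
  assumes S: "sets M = sets (restrict_space borel (simplexY :: (real^'a::finite) set))"
  shows "{y\<in>space M. cnt n y = m} \<in> sets M"
proof -
  have e: "{y\<in>space M. cnt n y = m} = simplexY \<inter> ({y::real^'a. \<forall>b\<in>UNIV - {undefined}. nat \<lfloor>real n * y $ b\<rfloor> = m b}
          \<inter> {y. n - (\<Sum>b\<in>UNIV - {undefined}. m b) = m undefined})"
  proof -
    have "cnt n y = m \<longleftrightarrow> (\<forall>b\<in>UNIV - {undefined}. nat \<lfloor>real n * y $ b\<rfloor> = m b) \<and> n - (\<Sum>b\<in>UNIV - {undefined}. m b) = m undefined" for y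
    proof
      assume c: "cnt n y = m"
      have "\<forall>b\<in>UNIV - {undefined}. nat \<lfloor>real n * y $ b\<rfloor> = m b"
      proof
        fix b :: 'a assume "b \<in> UNIV - {undefined}"
        then have "b \<noteq> undefined" by simp
        then show "nat \<lfloor>real n * y $ b\<rfloor> = m b" by (simp add: c[symmetric] cnt_def)
      qed
      moreover have "n - (\<Sum>b\<in>UNIV - {undefined}. nat \<lfloor>real n * y $ b\<rfloor>) = m undefined"
        using c unfolding cnt_def by (auto dest: fun_cong[of _ _ undefined])
      ultimately show "(\<forall>b\<in>UNIV - {undefined}. nat \<lfloor>real n * y $ b\<rfloor> = m b) \<and> n - (\<Sum>b\<in>UNIV - {undefined}. m b) = m undefined"
        by (metis (no_types, lifting) sum.cong)
    next
      assume "(\<forall>b\<in>UNIV - {undefined}. nat \<lfloor>real n * y $ b\<rfloor> = m b) \<and> n - (\<Sum>b\<in>UNIV - {undefined}. m b) = m undefined"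
      then show "cnt n y = m" unfolding cnt_def
        by (auto simp: fun_eq_iff intro: sum.cong)
    qed
    then show ?thesis using space_outcome[OF S] by auto
  qed
  have "({y::real^'a. \<forall>b\<in>UNIV - {undefined}. nat \<lfloor>real n * y $ b\<rfloor> = m b}
          \<inter> {y. n - (\<Sum>b\<in>UNIV - {undefined}. m b) = m undefined}) \<in> sets borel"
    using ev_meas by (cases "n - (\<Sum>b\<in>UNIV - {undefined}. m b) = m undefined") auto
  then have "simplexY \<inter> ({y::real^'a. \<forall>b\<in>UNIV - {undefined}. nat \<lfloor>real n * y $ b\<rfloor> = m b}
          \<inter> {y. n - (\<Sum>b\<in>UNIV - {undefined}. m b) = m undefined}) \<in> sets (restrict_space borel simplexY)"
    by (auto simp: sets_restrict_space)
  then show ?thesis unfolding e S .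
qed

lemma disc_int:
  fixes h :: "real^'a::finite \<Rightarrow> real"
  assumes P: "prob_space M" and S: "sets M = sets (restrict_space borel (simplexY :: (real^'a) set))"
  shows "integrable M (\<lambda>y. h (zm n (cnt n y)))"
    "(\<integral>y. h (zm n (cnt n y)) \<partial>M) = (\<Sum>m\<in>Mset n. measure M {y\<in>space M. cnt n y = m} * h (zm n m))"
proof -
  interpret prob_space M by (rule P)
  have sp: "space M = simplexY" by (rule space_outcome[OF S])
  have eq: "h (zm n (cnt n y)) = (\<Sum>m\<in>Mset n. h (zm n m) * indicator {y\<in>space M. cnt n y = m} y)"
    if y: "y \<in> space M" for y
  proof -
    have cm: "cnt n y \<in> Mset n" using cnt_sum y sp unfolding Mset_def by auto
    have "(\<Sum>m\<in>Mset n. h (zm n m) * indicator {y\<in>space M. cnt n y = m} y)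
        = (\<Sum>m\<in>Mset n. if m = cnt n y then h (zm n m) else 0)"
      using y by (intro sum.cong) (auto simp: indicator_def)
    also have "\<dots> = h (zm n (cnt n y))" using cm by (subst sum.delta[OF finite_Mset]) simp
    finally show ?thesis by simp
  qed
  have int_each: "integrable M (\<lambda>y. h (zm n m) * indicator {y\<in>space M. cnt n y = m} y)" for m
    using E_meas[OF S] by (intro integrable_mult_right integrable_real_indicator) (auto simp: less_top[symmetric])
  show "integrable M (\<lambda>y. h (zm n (cnt n y)))"
  proof -
    have "integrable M (\<lambda>y. \<Sum>m\<in>Mset n. h (zm n m) * indicator {y\<in>space M. cnt n y = m} y)"
      by (intro Bochner_Integration.integrable_sum int_each)
    moreover have "integrable M (\<lambda>y. h (zm n (cnt n y))) = integrable M (\<lambda>y. \<Sum>m\<in>Mset n. h (zm n m) * indicator {y\<in>space M. cnt n y = m} y)"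
      by (rule Bochner_Integration.integrable_cong) (auto simp: eq)
    ultimately show ?thesis by simp
  qed
  have "(\<integral>y. h (zm n (cnt n y)) \<partial>M) = (\<integral>y. (\<Sum>m\<in>Mset n. h (zm n m) * indicator {y\<in>space M. cnt n y = m} y) \<partial>M)"
    by (rule Bochner_Integration.integral_cong) (auto simp: eq)
  also have "\<dots> = (\<Sum>m\<in>Mset n. \<integral>y. h (zm n m) * indicator {y\<in>space M. cnt n y = m} y \<partial>M)"
    by (rule Bochner_Integration.integral_sum) (rule int_each)
  also have "\<dots> = (\<Sum>m\<in>Mset n. measure M {y\<in>space M. cnt n y = m} * h (zm n m))"
    by (intro sum.cong refl) (simp add: Int_absorb2)
  finally show "(\<integral>y. h (zm n (cnt n y)) \<partial>M) = (\<Sum>m\<in>Mset n. measure M {y\<in>space M. cnt n y = m} * h (zm n m))" .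
qed

lemma cont_integrable:
  fixes h :: "real^'a::finite \<Rightarrow> real"
  assumes P: "prob_space M" and S: "sets M = sets (restrict_space borel (simplexY :: (real^'a) set))"
    and c: "continuous_on simplexY h"
  shows "integrable M h"
proof -
  interpret prob_space M by (rule P)
  have sp: "space M = simplexY" by (rule space_outcome[OF S])
  have meas: "h \<in> borel_measurable M"
    using borel_measurable_continuous_on_restrict[OF c] measurable_cong_sets[OF S refl] by blast
  obtain B where B: "\<forall>y\<in>simplexY. norm (h y) \<le> B"
    using compact_imp_bounded[OF compact_continuous_image[OF c compact_simplex]]
    unfolding bounded_iff by auto
  show ?thesis by (rule integrable_const_bound[where B=B]) (use B sp meas in auto)
qed

lemma disc_approx:
  fixes h :: "real^'a::finite \<Rightarrow> real"
  assumes P: "prob_space M" and S: "sets M = sets (restrict_space borel (simplexY :: (real^'a) set))"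
    and c: "continuous_on simplexY h" and z: "\<forall>y\<in>simplexY. \<bar>h (zm n (cnt n y)) - h y\<bar> \<le> \<zeta>"
  shows "\<bar>(\<integral>y. h (zm n (cnt n y)) \<partial>M) - (\<integral>y. h y \<partial>M)\<bar> \<le> \<zeta>"
proof -
  interpret prob_space M by (rule P)
  have sp: "space M = simplexY" by (rule space_outcome[OF S])
  have i1: "integrable M (\<lambda>y. h (zm n (cnt n y)))" by (rule disc_int(1)[OF P S])
  have i2: "integrable M h" by (rule cont_integrable[OF P S c])
  have "\<bar>(\<integral>y. h (zm n (cnt n y)) \<partial>M) - (\<integral>y. h y \<partial>M)\<bar> = \<bar>\<integral>y. h (zm n (cnt n y)) - h y \<partial>M\<bar>"
    using i1 i2 by simp
  also have "\<dots> \<le> (\<integral>y. \<zeta> \<partial>M)"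
    by (rule integral_abs_bound_integral) (use i1 i2 z sp in auto)
  also have "\<dots> = \<zeta>" by (simp add: prob_space)
  finally show ?thesis .
qed




definition fw :: "nat \<Rightarrow> (('a::finite \<Rightarrow> nat) \<Rightarrow> real) \<Rightarrow> (nat \<Rightarrow> 'a) \<Rightarrow> real" where
  "fw n w \<tau> = (\<Sum>m\<in>Mset n. w m * (real (card {r\<in>{..<n}. rho n m r = \<tau>}) / real n))"

lemma fw_sum:
  assumes n: "n > 0"
  shows "(\<Sum>\<tau>\<in>type_profiles {..<n}. fw n w \<tau> * G \<tau>) = (\<Sum>m\<in>Mset n. w m * ((\<Sum>r\<in>{..<n}. G (rho n m r)) / real n))"
proof -
  have TP: "finite (type_profiles {..<n} :: (nat \<Rightarrow> 'a) set)" by (rule finite_type_profiles) simp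
  have "(\<Sum>\<tau>\<in>type_profiles {..<n}. fw n w \<tau> * G \<tau>)
      = (\<Sum>m\<in>Mset n. w m / real n * (\<Sum>\<tau>\<in>type_profiles {..<n}. real (card {r\<in>{..<n}. rho n m r = \<tau>}) * G \<tau>))"
    unfolding fw_def by (simp add: sum_distrib_right sum_distrib_left mult.assoc sum.swap[of _ "Mset n"])
  also have "\<dots> = (\<Sum>m\<in>Mset n. w m / real n * (\<Sum>r\<in>{..<n}. G (rho n m r)))"
    using TP rho_tp by (subst fiber_sum) auto
  finally show ?thesis by simp
qed

lemma fw_zero: "\<tau> \<notin> type_profiles {..<n} \<Longrightarrow> fw n w \<tau> = 0"
proof -
  assume t: "\<tau> \<notin> type_profiles {..<n}"
  have "{r\<in>{..<n}. rho n m r = \<tau>} = {}" for m using t rho_tp by auto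
  then have c0: "card {r\<in>{..<n}. rho n m r = \<tau>} = 0" for m by (simp only: card.empty)
  show ?thesis unfolding fw_def by (rule sum.neutral) (simp only: c0 of_nat_0 div_0 mult_zero_right, simp)
qed

lemma fw_nonneg: "(\<And>m. 0 \<le> w m) \<Longrightarrow> 0 \<le> fw n w \<tau>"
  unfolding fw_def by (intro sum_nonneg mult_nonneg_nonneg) auto

lemma fw_total:
  assumes n: "n > 0" and w1: "(\<Sum>m\<in>Mset n. w m) = 1"
  shows "(\<Sum>\<tau>\<in>type_profiles {..<n}. fw n w \<tau>) = 1"
  using fw_sum[OF n, of w "\<lambda>_. 1"] w1 n by simp

definition tpc :: "nat \<Rightarrow> ('t \<Rightarrow> ('a::finite \<Rightarrow> nat) \<Rightarrow> real) \<Rightarrow> 't \<Rightarrow> (nat \<Rightarrow> 'a) pmf" where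
  "tpc n w \<theta> = embed_pmf (fw n (w \<theta>))"

lemma tpc_pmf:
  assumes n: "n > 0" and w0: "\<And>m. 0 \<le> w \<theta> m" and w1: "(\<Sum>m\<in>Mset n. w \<theta> m) = 1"
  shows "pmf (tpc n w \<theta>) = fw n (w \<theta>)"
proof -
  have TP: "finite (type_profiles {..<n} :: (nat \<Rightarrow> 'a) set)" by (rule finite_type_profiles) simp
  have "(\<integral>\<^sup>+x. ennreal (fw n (w \<theta>) x) \<partial>count_space UNIV) = (\<Sum>x\<in>type_profiles {..<n}. ennreal (fw n (w \<theta>) x))"
    by (rule nn_integral_count_space'[OF TP]) (auto simp: fw_zero)
  also have "\<dots> = ennreal (\<Sum>x\<in>type_profiles {..<n}. fw n (w \<theta>) x)"
    by (rule sum_ennreal) (rule fw_nonneg[OF w0])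
  also have "\<dots> = 1" using fw_total[OF n w1] by simp
  finally have "(\<integral>\<^sup>+x. ennreal (fw n (w \<theta>) x) \<partial>count_space UNIV) = 1" .
  then show ?thesis unfolding tpc_def
    by (intro ext pmf_embed_pmf) (auto intro: fw_nonneg[OF w0])
qed

lemma tpc_set:
  assumes n: "n > 0" and w0: "\<And>m. 0 \<le> w \<theta> m" and w1: "(\<Sum>m\<in>Mset n. w \<theta> m) = 1"
  shows "set_pmf (tpc n w \<theta>) \<subseteq> type_profiles {..<n}"
  using tpc_pmf[of n w \<theta>, OF n w0 w1] fw_zero by (auto simp: set_pmf_eq)

lemma tpc_direct:
  assumes n: "n > 0" and w0: "\<And>\<theta> m. 0 \<le> w \<theta> m" and w1: "\<And>\<theta>. (\<Sum>m\<in>Mset n. w \<theta> m) = 1"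
  shows "direct_info {..<n} (\<lambda>_. 1 / real n) (tpc n w)"
proof -
  have "set_pmf (tpc n w \<theta>) \<subseteq> type_profiles {..<n}" for \<theta>
    by (rule tpc_set[of n w \<theta>]) (use n w0 w1 in auto)
  then show ?thesis unfolding direct_info_def using n by auto
qed




definition obp :: "nat \<Rightarrow> nat \<Rightarrow> 'a::finite \<Rightarrow> real^'a" where
  "obp n = (\<lambda>k t. if k \<in> {..<n} then (1 / real n) *\<^sub>R axis t (1::real) else 0)"

lemma sum_axis: "(\<Sum>x\<in>UNIV. axis t (1::real) $ x) = 1"
  by (simp add: axis_def)

lemma obp_profile: "interim_profile {..<n} (\<lambda>_. 1 / real n) (obp n)"
  unfolding interim_profile_def obp_def simplex_gamma_def
proof (intro ballI allI, simp)
  fix t :: 'a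
  have "(\<Sum>x\<in>UNIV. ((1 / real n) *\<^sub>R axis t (1::real)) $ x) = (1 / real n) * (\<Sum>x\<in>UNIV. axis t (1::real) $ x)"
    by (simp add: sum_distrib_left)
  then show "(\<forall>a. 0 \<le> axis t 1 $ a / real n) \<and> (\<Sum>x\<in>UNIV. axis t 1 $ x / real n) = 1 / real n"
    by (simp add: sum_axis axis_def)
qed

lemma ob_expect:
  assumes n: "n > 0" and w0: "\<And>m. 0 \<le> w \<theta> m" and w1: "(\<Sum>m\<in>Mset n. w \<theta> m) = 1"
  shows "(\<Sum>\<tau>\<in>type_profiles {..<n}. pmf (tpc n w \<theta>) \<tau> * G \<tau>) = (\<Sum>m\<in>Mset n. w \<theta> m * ((\<Sum>r\<in>{..<n}. G (rho n m r)) / real n))"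
  unfolding tpc_pmf[of n w \<theta>, OF n w0 w1] by (rule fw_sum[OF n])

lemma tf_obp: "sum m UNIV = n \<Longrightarrow> n > 0 \<Longrightarrow> total_flow {..<n} (obp n) (rho n m r) = zm n m"
  unfolding obp_def by (rule total_flow_rho)

definition Chat :: "('t::finite \<Rightarrow> real) \<Rightarrow> ('a::finite \<Rightarrow> real ^ 'a \<Rightarrow> 't \<Rightarrow> real) \<Rightarrow> nat
    \<Rightarrow> ('t \<Rightarrow> ('a \<Rightarrow> nat) \<Rightarrow> real) \<Rightarrow> 'a \<Rightarrow> 'a \<Rightarrow> real" where
  "Chat p c n w t b = (\<Sum>\<theta>\<in>UNIV. p \<theta> * (\<Sum>m\<in>Mset n. w \<theta> m * (zm n m $ t * c b (zm n m) \<theta>)))"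

lemma ob_IC:
  fixes w :: "'t::finite \<Rightarrow> ('a::finite \<Rightarrow> nat) \<Rightarrow> real" and p :: "'t \<Rightarrow> real"
    and c :: "'a \<Rightarrow> real^'a \<Rightarrow> 't \<Rightarrow> real"
  assumes n: "n > 0" and w0: "\<And>\<theta> m. 0 \<le> w \<theta> m" and w1: "\<And>\<theta>. (\<Sum>m\<in>Mset n. w \<theta> m) = 1"
    and k: "k < n"
  shows "interim_cost p c {..<n} (tpc n w) (obp n) k t b = Chat p c n w t b"
proof -
  have TP: "finite (type_profiles {..<n} :: (nat \<Rightarrow> 'a) set)" by (rule finite_type_profiles) simp
  have inner: "(\<Sum>\<tau>\<in>{\<tau>\<in>type_profiles {..<n}. \<tau> k = t}. p \<theta> * pmf (tpc n w \<theta>) \<tau> * c b (total_flow {..<n} (obp n) \<tau>) \<theta>)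
      = p \<theta> * (\<Sum>m\<in>Mset n. w \<theta> m * (zm n m $ t * c b (zm n m) \<theta>))" for \<theta>
  proof -
    have "(\<Sum>\<tau>\<in>{\<tau>\<in>type_profiles {..<n}. \<tau> k = t}. p \<theta> * pmf (tpc n w \<theta>) \<tau> * c b (total_flow {..<n} (obp n) \<tau>) \<theta>)
        = p \<theta> * (\<Sum>\<tau>\<in>type_profiles {..<n}. pmf (tpc n w \<theta>) \<tau> * (if \<tau> k = t then c b (total_flow {..<n} (obp n) \<tau>) \<theta> else 0))"
      by (subst sum.inter_filter[OF TP]) (auto simp: sum_distrib_left intro!: sum.cong)
    also have "\<dots> = p \<theta> * (\<Sum>m\<in>Mset n. w \<theta> m * ((\<Sum>r\<in>{..<n}. (if rho n m r k = t then c b (total_flow {..<n} (obp n) (rho n m r)) \<theta> else 0)) / real n))"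
      by (subst ob_expect[OF n w0 w1]) rule
    also have "\<dots> = p \<theta> * (\<Sum>m\<in>Mset n. w \<theta> m * (zm n m $ t * c b (zm n m) \<theta>))"
    proof (intro arg_cong[where f="\<lambda>x. p \<theta> * x"] sum.cong refl)
      fix m :: "'a \<Rightarrow> nat" assume m: "m \<in> Mset n"
      then have ms: "sum m UNIV = n" unfolding Mset_def by simp
      have "(\<Sum>r\<in>{..<n}. (if rho n m r k = t then c b (total_flow {..<n} (obp n) (rho n m r)) \<theta> else 0))
          = (\<Sum>r\<in>{..<n}. (if rho n m r k = t then c b (zm n m) \<theta> else 0))"
        by (intro sum.cong refl) (simp add: tf_obp[OF ms n])
      also have "\<dots> = real (card {r\<in>{..<n}. rho n m r k = t}) * c b (zm n m) \<theta>"
        by (simp add: sum.If_cases Int_def)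
      also have "\<dots> = real (m t) * c b (zm n m) \<theta>" using rho_count[OF ms n k] by simp
      finally show "w \<theta> m * ((\<Sum>r\<in>{..<n}. (if rho n m r k = t then c b (total_flow {..<n} (obp n) (rho n m r)) \<theta> else 0)) / real n)
          = w \<theta> m * (zm n m $ t * c b (zm n m) \<theta>)"
        unfolding zm_def by simp
    qed
    finally show ?thesis .
  qed
  show ?thesis unfolding interim_cost_def Chat_def inner ..
qed

lemma ob_exp:
  fixes w :: "'t \<Rightarrow> ('a::finite \<Rightarrow> nat) \<Rightarrow> real" and f :: "real^'a \<Rightarrow> real"
  assumes n: "n > 0" and w0: "\<And>\<theta> m. 0 \<le> w \<theta> m" and w1: "\<And>\<theta>. (\<Sum>m\<in>Mset n. w \<theta> m) = 1"
  shows "measure_pmf.expectation (BW_outcome {..<n} (tpc n w) (obp n) \<theta>) f = (\<Sum>m\<in>Mset n. w \<theta> m * f (zm n m))"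
proof -
  have d: "direct_info {..<n} (\<lambda>_. 1 / real n) (tpc n w)" by (rule tpc_direct[OF n w0 w1])
  have "measure_pmf.expectation (BW_outcome {..<n} (tpc n w) (obp n) \<theta>) f
     = (\<Sum>\<tau>\<in>type_profiles {..<n}. pmf (tpc n w \<theta>) \<tau> * f (total_flow {..<n} (obp n) \<tau>))"
    by (rule BW_exp[OF d])
  also have "\<dots> = (\<Sum>m\<in>Mset n. w \<theta> m * ((\<Sum>r\<in>{..<n}. f (total_flow {..<n} (obp n) (rho n m r))) / real n))"
    by (rule ob_expect[OF n w0 w1])
  also have "\<dots> = (\<Sum>m\<in>Mset n. w \<theta> m * f (zm n m))"
  proof (intro sum.cong refl)
    fix m :: "'a \<Rightarrow> nat" assume m: "m \<in> Mset n"
    then have ms: "sum m UNIV = n" unfolding Mset_def by simp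
    show "w \<theta> m * ((\<Sum>r\<in>{..<n}. f (total_flow {..<n} (obp n) (rho n m r))) / real n) = w \<theta> m * f (zm n m)"
      using tf_obp[OF ms n] n by simp
  qed
  finally show ?thesis .
qed

lemma ob_reg:
  fixes w :: "'t::finite \<Rightarrow> ('a::finite \<Rightarrow> nat) \<Rightarrow> real" and p :: "'t \<Rightarrow> real"
    and c :: "'a \<Rightarrow> real^'a \<Rightarrow> 't \<Rightarrow> real"
  assumes n: "n > 0" and w0: "\<And>\<theta> m. 0 \<le> w \<theta> m" and w1: "\<And>\<theta>. (\<Sum>m\<in>Mset n. w \<theta> m) = 1"
  shows "reg p c {..<n} (\<lambda>_. 1 / real n) (tpc n w) (obp n) = (\<Sum>t\<in>UNIV. Chat p c n w t t - Min (range (Chat p c n w t)))"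
proof -
  have "reg p c {..<n} (\<lambda>_. 1 / real n) (tpc n w) (obp n)
      = (\<Sum>k\<in>{..<n}. \<Sum>t\<in>UNIV. (Chat p c n w t t - Min (range (Chat p c n w t))) / real n)"
    unfolding reg_def
  proof (intro sum.cong refl)
    fix k t assume k: "k \<in> {..<n}"
    have ic: "interim_cost p c {..<n} (tpc n w) (obp n) k t = Chat p c n w t"
      by (intro ext ob_IC[where n=n and w=w, OF n w0 w1]) (use k in auto)
    have "(\<lambda>a. obp n k t $ a * Chat p c n w t a) = (\<lambda>a. if a = t then Chat p c n w t t / real n else 0)"
      using k by (auto simp: fun_eq_iff obp_def axis_def)
    then have "(\<Sum>a\<in>UNIV. obp n k t $ a * Chat p c n w t a) = (\<Sum>a\<in>UNIV. if a = t then Chat p c n w t t / real n else 0)"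
      by (rule arg_cong)
    also have "\<dots> = Chat p c n w t t / real n" by simp
    finally have "(\<Sum>a\<in>UNIV. obp n k t $ a * Chat p c n w t a) = Chat p c n w t t / real n" .
    then show "(\<Sum>a\<in>UNIV. obp n k t $ a * interim_cost p c {..<n} (tpc n w) (obp n) k t a) -
        1 / real n * Min (range (interim_cost p c {..<n} (tpc n w) (obp n) k t))
        = (Chat p c n w t t - Min (range (Chat p c n w t))) / real n"
      unfolding ic by (simp add: diff_divide_distrib)
  qed
  also have "\<dots> = (\<Sum>t\<in>UNIV. Chat p c n w t t - Min (range (Chat p c n w t)))"
    using n by (simp add: sum.swap[of _ "{..<n}"] sum_divide_distrib[symmetric])
  finally show ?thesis .
qed




lemma unif_fin:
  fixes F :: "'i::finite \<Rightarrow> real^'a::finite \<Rightarrow> real"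
  assumes c: "\<forall>i. continuous_on simplexY (F i)" and z: "\<zeta> > 0"
  shows "\<exists>\<delta>>0. \<forall>i. \<forall>y\<in>simplexY. \<forall>y'\<in>simplexY. dist y y' < \<delta> \<longrightarrow> \<bar>F i y - F i y'\<bar> \<le> \<zeta>"
proof -
  have "\<exists>d>0. \<forall>y\<in>simplexY. \<forall>y'\<in>simplexY. dist y y' < d \<longrightarrow> \<bar>F i y - F i y'\<bar> \<le> \<zeta>" for i
  proof -
    have "uniformly_continuous_on simplexY (F i)"
      using c compact_simplex by (metis compact_uniformly_continuous)
    then obtain d where d: "d > 0" "\<forall>x\<in>simplexY. \<forall>x'\<in>simplexY. dist x' x < d \<longrightarrow> dist (F i x') (F i x) < \<zeta>"
      unfolding uniformly_continuous_on_def using z by metis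
    show ?thesis
      by (rule exI[of _ d]) (use d in \<open>auto simp: dist_real_def dist_commute less_imp_le\<close>)
  qed
  then obtain d where d: "\<And>i. d i > 0" "\<And>i. \<forall>y\<in>simplexY. \<forall>y'\<in>simplexY. dist y y' < d i \<longrightarrow> \<bar>F i y - F i y'\<bar> \<le> \<zeta>"
    by metis
  have "Min (range d) > 0" using d(1) by (subst Min_gr_iff) auto
  moreover have "Min (range d) \<le> d i" for i by (rule Min_le) auto
  ultimately show ?thesis using d(2) by (intro exI[of _ "Min (range d)"]) (meson order_less_le_trans)
qed


lemma construct:
  fixes p :: "'t::finite \<Rightarrow> real" and c :: "'a::finite \<Rightarrow> real ^ 'a \<Rightarrow> 't \<Rightarrow> real"
    and \<mu> :: "'t \<Rightarrow> (real ^ 'a) measure" and \<psi> :: "real ^ 'a \<Rightarrow> 't \<Rightarrow> real"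
  assumes g: "basic_game p c" and eq: "BCWE p c \<mu>"
    and psi: "\<forall>\<theta>. continuous_on simplexY (\<lambda>y. \<psi> y \<theta>)" and r: "r > 0" and z0: "z0 > 0"
  shows "\<exists>(K :: nat set) (gam :: nat \<Rightarrow> real) (tp :: 't \<Rightarrow> (nat \<Rightarrow> 'a) pmf) ob.
     direct_info K gam tp \<and> interim_profile K gam ob \<and> reg p c K gam tp ob \<le> r \<and>
     (\<forall>\<theta>. \<bar>(\<integral>y. \<psi> y \<theta> \<partial>\<mu> \<theta>) - measure_pmf.expectation (BW_outcome K tp ob \<theta>) (\<lambda>y. \<psi> y \<theta>)\<bar> \<le> z0)"
proof -
  have P: "prob_space (\<mu> \<theta>)" and S: "sets (\<mu> \<theta>) = sets (restrict_space borel simplexY)" for \<theta>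
    using eq unfolding BCWE_def is_outcome_def by auto
  have cardpos: "real CARD('a) > 0" by simp
  define \<zeta> where "\<zeta> = min z0 (r / (2 * real CARD('a)))"
  have zpos: "\<zeta> > 0" unfolding \<zeta>_def using z0 r cardpos by simp
  define F :: "bool \<times> 't \<times> 'a \<times> 'a \<Rightarrow> real^'a \<Rightarrow> real" where
    "F i = (case i of (True, \<theta>, t, b) \<Rightarrow> (\<lambda>y. \<psi> y \<theta>) | (False, \<theta>, t, b) \<Rightarrow> (\<lambda>y. y $ t * c b y \<theta>))" for i
  have Fc: "\<forall>i. continuous_on simplexY (F i)"
  proof
    fix i :: "bool \<times> 't \<times> 'a \<times> 'a"
    obtain q \<theta> t b where i: "i = (q, \<theta>, t, b)" by (metis prod.collapse)
    have cc: "continuous_on simplexY (\<lambda>y. c b y \<theta>)" using g unfolding basic_game_def by auto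
    show "continuous_on simplexY (F i)"
      unfolding F_def i using psi cc by (cases q) (auto intro!: continuous_intros)
  qed
  obtain \<delta> where \<delta>: "\<delta> > 0" "\<forall>i. \<forall>y\<in>simplexY. \<forall>y'\<in>simplexY. dist y y' < \<delta> \<longrightarrow> \<bar>F i y - F i y'\<bar> \<le> \<zeta>"
    using unif_fin[OF Fc zpos] by blast
  define n where "n = nat \<lceil>real CARD('a) * real CARD('a) / \<delta>\<rceil> + 1"
  have n: "n > 0" unfolding n_def by simp
  have nbig: "real CARD('a) * real CARD('a) / real n < \<delta>"
  proof -
    have "real CARD('a) * real CARD('a) / \<delta> < real n" unfolding n_def by linarith
    then have "real CARD('a) * real CARD('a) < real n * \<delta>" using \<delta>(1) by (simp add: divide_less_eq)
    then show ?thesis using n by (simp add: divide_less_eq mult.commute)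
  qed
  have close: "\<bar>F i (zm n (cnt n y)) - F i y\<bar> \<le> \<zeta>" if y: "y \<in> simplexY" for i y
  proof -
    have "zm n (cnt n y) \<in> simplexY" by (rule zm_simplex[OF cnt_sum[OF y] n])
    moreover have "dist (zm n (cnt n y)) y < \<delta>" using zm_close[OF y n] nbig by linarith
    ultimately show ?thesis using \<delta>(2) y by blast
  qed
  define w where "w \<theta> m = measure (\<mu> \<theta>) {y\<in>space (\<mu> \<theta>). cnt n y = m}" for \<theta> m
  have w0: "0 \<le> w \<theta> m" for \<theta> m unfolding w_def by simp
  have wint: "(\<Sum>m\<in>Mset n. w \<theta> m * h (zm n m)) = (\<integral>y. h (zm n (cnt n y)) \<partial>\<mu> \<theta>)" for \<theta> h
    unfolding w_def using disc_int(2)[OF P S, where h=h and n=n] by (simp add: mult.commute)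
  have w1: "(\<Sum>m\<in>Mset n. w \<theta> m) = 1" for \<theta>
  proof -
    interpret prob_space "\<mu> \<theta>" by (rule P)
    show ?thesis using wint[of \<theta> "\<lambda>_. 1"] by (simp add: prob_space)
  qed
  have approx: "\<bar>(\<Sum>m\<in>Mset n. w \<theta> m * F i (zm n m)) - (\<integral>y. F i y \<partial>\<mu> \<theta>)\<bar> \<le> \<zeta>" for \<theta> i
    unfolding wint by (rule disc_approx[OF P S]) (use Fc close in blast)+
  define tp where "tp = tpc n w"
  have d: "direct_info {..<n} (\<lambda>_. 1 / real n) tp" unfolding tp_def by (rule tpc_direct[OF n w0 w1])
  have prof: "interim_profile {..<n} (\<lambda>_. 1 / real n) (obp n)" by (rule obp_profile)
  have psi_close: "\<bar>(\<integral>y. \<psi> y \<theta> \<partial>\<mu> \<theta>) - measure_pmf.expectation (BW_outcome {..<n} tp (obp n) \<theta>) (\<lambda>y. \<psi> y \<theta>)\<bar> \<le> z0" for \<theta>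
  proof -
    have "measure_pmf.expectation (BW_outcome {..<n} tp (obp n) \<theta>) (\<lambda>y. \<psi> y \<theta>)
        = (\<Sum>m\<in>Mset n. w \<theta> m * F (True, \<theta>, undefined, undefined) (zm n m))"
      unfolding tp_def ob_exp[OF n w0 w1] F_def by simp
    moreover have "(\<integral>y. \<psi> y \<theta> \<partial>\<mu> \<theta>) = (\<integral>y. F (True, \<theta>, undefined, undefined) y \<partial>\<mu> \<theta>)"
      unfolding F_def by simp
    ultimately show ?thesis using approx[of \<theta> "(True, \<theta>, undefined, undefined)"] \<zeta>_def by (simp add: abs_minus_commute)
  qed
  define C where "C t b = (\<Sum>\<theta>\<in>UNIV. p \<theta> * (\<integral>y. y $ t * c b y \<theta> \<partial>\<mu> \<theta>))" for t b
  have psum: "(\<Sum>\<theta>\<in>UNIV. p \<theta>) = 1" and ppos: "\<And>\<theta>. p \<theta> > 0" using g unfolding basic_game_def by auto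
  have Cclose: "\<bar>Chat p c n w t b - C t b\<bar> \<le> \<zeta>" for t b
  proof -
    have "Chat p c n w t b - C t b = (\<Sum>\<theta>\<in>UNIV. p \<theta> * ((\<Sum>m\<in>Mset n. w \<theta> m * F (False, \<theta>, t, b) (zm n m)) - (\<integral>y. F (False, \<theta>, t, b) y \<partial>\<mu> \<theta>)))"
      unfolding Chat_def C_def F_def by (simp add: sum_subtractf[symmetric] right_diff_distrib)
    also have "\<bar>\<dots>\<bar> \<le> (\<Sum>\<theta>\<in>UNIV. p \<theta> * \<zeta>)"
    proof (rule order_trans[OF sum_abs], rule sum_mono)
      fix \<theta> :: 't
      have "\<bar>p \<theta>\<bar> = p \<theta>" using ppos[of \<theta>] by simp
      moreover have "p \<theta> * \<bar>(\<Sum>m\<in>Mset n. w \<theta> m * F (False, \<theta>, t, b) (zm n m)) - (\<integral>y. F (False, \<theta>, t, b) y \<partial>\<mu> \<theta>)\<bar> \<le> p \<theta> * \<zeta>"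
        by (rule mult_left_mono[OF approx]) (use ppos[of \<theta>] in simp)
      ultimately show "\<bar>p \<theta> * ((\<Sum>m\<in>Mset n. w \<theta> m * F (False, \<theta>, t, b) (zm n m)) - (\<integral>y. F (False, \<theta>, t, b) y \<partial>\<mu> \<theta>))\<bar> \<le> p \<theta> * \<zeta>"
        by (simp add: abs_mult)
    qed
    also have "\<dots> = \<zeta>" using psum by (simp add: sum_distrib_right[symmetric])
    finally show ?thesis .
  qed
  have Cb: "C t t \<le> C t b" for t b using eq unfolding BCWE_def C_def by auto
  have regb: "Chat p c n w t t - Min (range (Chat p c n w t)) \<le> 2 * \<zeta>" for t
  proof -
    have "Min (range (Chat p c n w t)) \<in> range (Chat p c n w t)" by (rule Min_in) auto
    then obtain b where b: "Chat p c n w t b = Min (range (Chat p c n w t))" by (metis imageE)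
    show ?thesis using Cclose[of t t] Cclose[of t b] Cb[of t b] b by linarith
  qed
  have "reg p c {..<n} (\<lambda>_. 1 / real n) tp (obp n) = (\<Sum>t\<in>UNIV. Chat p c n w t t - Min (range (Chat p c n w t)))"
    unfolding tp_def by (rule ob_reg[OF n w0 w1])
  also have "\<dots> \<le> (\<Sum>t\<in>(UNIV::'a set). 2 * \<zeta>)" by (intro sum_mono regb)
  also have "\<dots> = real CARD('a) * (2 * \<zeta>)" by simp
  also have "\<dots> \<le> real CARD('a) * (2 * (r / (2 * real CARD('a))))"
    unfolding \<zeta>_def using cardpos by (intro mult_left_mono) auto
  also have "\<dots> = r" using cardpos by simp
  finally have "reg p c {..<n} (\<lambda>_. 1 / real n) tp (obp n) \<le> r" .
  then show ?thesis using d prof psi_close by blast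
qed




lemma tri4:
  fixes a b c i e :: real
  assumes "\<bar>a - b\<bar> \<le> e / 4" "\<bar>c - b\<bar> \<le> e / 4" "\<bar>i - c\<bar> \<le> e / 4" "0 < e"
  shows "\<bar>i - a\<bar> \<le> e"
proof -
  have "\<bar>i - a\<bar> \<le> \<bar>i - c\<bar> + \<bar>c - b\<bar> + \<bar>a - b\<bar>" 
    using abs_ge_self[of "i-c"] abs_ge_self[of "c-b"] abs_ge_minus_self[of "a-b"]
      abs_ge_minus_self[of "i-c"] abs_ge_minus_self[of "c-b"] abs_ge_self[of "a-b"]
    by (simp add: abs_le_iff)
  then show ?thesis using assms by linarith
qed

theorem mainTheorem4:
  fixes p :: "'t::finite \<Rightarrow> real"
    and c :: "'a::finite \<Rightarrow> real ^ 'a \<Rightarrow> 't \<Rightarrow> real"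
    and \<Phi> :: "'t \<Rightarrow> real ^ 'a \<Rightarrow> real"
    and \<mu> :: "'t \<Rightarrow> (real ^ 'a) measure"
    and \<psi> :: "real ^ 'a \<Rightarrow> 't \<Rightarrow> real"
    and \<epsilon> :: real
  assumes game: "basic_game p c"
    and pot: "is_potential c \<Phi>"
    and sconv: "\<forall>\<theta>. strictly_convex_on simplexY (\<Phi> \<theta>)"
    and eq: "BCWE p c \<mu>"
    and psi_cont: "\<forall>\<theta>. continuous_on simplexY (\<lambda>y. \<psi> y \<theta>)"
    and eps: "\<epsilon> > 0"
  shows "\<exists>\<alpha>>0. \<exists>(K :: nat set) (gam :: nat \<Rightarrow> real) (tp :: 't \<Rightarrow> (nat \<Rightarrow> 'a) pmf).
           direct_info K gam tp \<and>
           (\<exists>yh. BW_eps_eq p c K gam tp 0 yh) \<and>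
           (\<forall>yh1 yh2. BW_eps_eq p c K gam tp 0 yh1 \<and> BW_eps_eq p c K gam tp 0 yh2 \<longrightarrow>
               BW_outcome K tp yh1 = BW_outcome K tp yh2) \<and>
           (\<forall>yh. BW_eps_eq p c K gam tp \<alpha> yh \<longrightarrow>
              (\<forall>\<theta>. \<bar>(\<integral>y. \<psi> y \<theta> \<partial>\<mu> \<theta>)
                     - measure_pmf.expectation (BW_outcome K tp yh \<theta>) (\<lambda>y. \<psi> y \<theta>)\<bar> \<le> \<epsilon>))"
proof -
  have "\<exists>B. \<forall>y\<in>simplexY. \<bar>\<psi> y \<theta>\<bar> \<le> B" for \<theta>
  proof -
    have "bounded ((\<lambda>y. \<psi> y \<theta>) ` simplexY)"
      using psi_cont compact_simplex by (intro compact_imp_bounded compact_continuous_image) auto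
    then show ?thesis unfolding bounded_iff by auto
  qed
  then obtain B where B: "\<And>\<theta>. \<forall>y\<in>simplexY. \<bar>\<psi> y \<theta>\<bar> \<le> B \<theta>" by metis
  define M where "M = (\<Sum>\<theta>\<in>UNIV. \<bar>B \<theta>\<bar>)"
  have M0: "M \<ge> 0" unfolding M_def by (simp add: sum_nonneg)
  have Mb: "\<forall>y\<in>simplexY. \<bar>\<psi> y \<theta>\<bar> \<le> M" for \<theta>
  proof
    fix y :: "real^'a" assume "y \<in> simplexY"
    then have "\<bar>\<psi> y \<theta>\<bar> \<le> \<bar>B \<theta>\<bar>" using B[of \<theta>] by force
    also have "\<dots> \<le> M" unfolding M_def by (rule member_le_sum) auto
    finally show "\<bar>\<psi> y \<theta>\<bar> \<le> M" .
  qed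
  have e8: "\<epsilon> / 8 > 0" using eps by simp
  obtain \<eta> where \<eta>: "\<eta> > 0" "\<forall>\<theta>. \<forall>y\<in>simplexY. \<forall>y'\<in>simplexY. dist y y' < \<eta> \<longrightarrow> \<bar>\<psi> y \<theta> - \<psi> y' \<theta>\<bar> \<le> \<epsilon> / 8"
    using unif_fin[of "\<lambda>\<theta> y. \<psi> y \<theta>", OF psi_cont e8] by blast
  obtain \<kappa> where \<kappa>: "\<kappa> > 0" "\<forall>\<theta> y y'. y \<in> simplexY \<and> y' \<in> simplexY \<and> \<eta> \<le> dist y y' \<longrightarrow> \<kappa> \<le> Gm c \<theta> y y'"
    using Gm_margin[OF game pot sconv \<eta>(1)] by blast
  define pmin where "pmin = Min (range p)"
  have ppos: "\<And>\<theta>. p \<theta> > 0" using game unfolding basic_game_def by auto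
  have pmin: "pmin > 0" unfolding pmin_def using ppos by (subst Min_gr_iff) auto
  have pminle: "pmin \<le> p \<theta>" for \<theta> unfolding pmin_def by (rule Min_le) auto
  define r where "r = \<epsilon> * pmin * \<kappa> / (16 * (M + 1))"
  have r: "r > 0" unfolding r_def using eps pmin \<kappa>(1) M0 by simp
  have e4: "\<epsilon> / 4 > 0" using eps by simp
  obtain K gam and tp :: "'t \<Rightarrow> (nat \<Rightarrow> 'a) pmf" and ob where
    d: "direct_info K gam tp" and obP: "interim_profile K gam ob" and obr: "reg p c K gam tp ob \<le> r"
    and obc: "\<forall>\<theta>. \<bar>(\<integral>y. \<psi> y \<theta> \<partial>\<mu> \<theta>) - measure_pmf.expectation (BW_outcome K tp ob \<theta>) (\<lambda>y. \<psi> y \<theta>)\<bar> \<le> \<epsilon> / 4"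
    using construct[OF game eq psi_cont r e4] by blast
  obtain ys where ys: "BW_eps_eq p c K gam tp 0 ys" using exists_eq[OF game pot d] by blast
  have bnd: "2 * M * r / (p \<theta> * \<kappa>) \<le> \<epsilon> / 8" for \<theta>
  proof -
    have mm: "M / (M + 1) \<le> 1" using M0 by simp
    have "2 * M * r = (\<epsilon> * pmin * \<kappa> / 8) * (M / (M + 1))" unfolding r_def using M0 by (simp add: field_simps)
    also have "\<dots> \<le> \<epsilon> * pmin * \<kappa> / 8" using mm eps pmin \<kappa>(1) by (intro mult_left_le) auto
    also have "\<dots> \<le> \<epsilon> * p \<theta> * \<kappa> / 8" using pminle[of \<theta>] eps \<kappa>(1) by (intro divide_right_mono mult_right_mono mult_left_mono) auto
    finally have "2 * M * r \<le> \<epsilon> / 8 * (p \<theta> * \<kappa>)" by simp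
    then show ?thesis using ppos[of \<theta>] \<kappa>(1) by (simp add: divide_le_eq)
  qed
  have cl: "\<bar>measure_pmf.expectation (BW_outcome K tp yh \<theta>) (\<lambda>y. \<psi> y \<theta>) - measure_pmf.expectation (BW_outcome K tp ys \<theta>) (\<lambda>y. \<psi> y \<theta>)\<bar> \<le> \<epsilon> / 4"
    if yP: "interim_profile K gam yh" and yr: "reg p c K gam tp yh \<le> r" for yh \<theta>
  proof -
    have "\<bar>measure_pmf.expectation (BW_outcome K tp yh \<theta>) (\<lambda>y. \<psi> y \<theta>) - measure_pmf.expectation (BW_outcome K tp ys \<theta>) (\<lambda>y. \<psi> y \<theta>)\<bar>
        \<le> \<epsilon> / 8 + 2 * M * r / (p \<theta> * \<kappa>)"
      by (rule close_outcomes[OF game pot sconv d yP ys yr Mb]) (use \<eta> \<kappa> eps in auto)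
    then show ?thesis using bnd[of \<theta>] by linarith
  qed
  show ?thesis
  proof (intro exI[of _ r] conjI r exI[of _ K] exI[of _ gam] exI[of _ tp] d allI impI)
    show "\<exists>yh. BW_eps_eq p c K gam tp 0 yh" using ys by blast
  next
    fix yh1 yh2 assume "BW_eps_eq p c K gam tp 0 yh1 \<and> BW_eps_eq p c K gam tp 0 yh2"
    then show "BW_outcome K tp yh1 = BW_outcome K tp yh2"
      using unique_outcome[OF game pot sconv d] by blast
  next
    fix yh \<theta> assume e: "BW_eps_eq p c K gam tp r yh"
    have yP: "interim_profile K gam yh" using e unfolding BW_eps_eq_def by auto
    have yr: "reg p c K gam tp yh \<le> r" using reg_le[OF game d e] r by simp
    show "\<bar>(\<integral>y. \<psi> y \<theta> \<partial>\<mu> \<theta>) - measure_pmf.expectation (BW_outcome K tp yh \<theta>) (\<lambda>y. \<psi> y \<theta>)\<bar> \<le> \<epsilon>"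
      using cl[OF yP yr, of \<theta>] cl[OF obP obr, of \<theta>] obc[rule_format, of \<theta>] eps by (rule tri4)
  qed
qed


end
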